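(* There exist rings $R\supseteq S$ (with the same $1$) and a central idempotent $e$ of $R$ such that $R=Se+S(1-e)$, $S$ is finitely presented as a ring, but $R$ is not finitely presented as a ring.
   Context: A ring is finitely presented if it is isomorphic to $F/I$ where $F$ is a free ring (free $\mathbb{Z}$-algebra with $1$) on finitely many generators and $I$ is a two-sided ideal of $F$ generated by finitely many elements. *)

theory Defs
  imports "HOL-Algebra.QuotRing" "HOL-Algebra.Subrings"
begin

text \<open>The free ring (free Z-algebra with 1) on n generators x_0,...,x_{n-1}:
  the monoid ring Z<x_0,...,x_{n-1}> of the free monoid, realised as finitely
  supported integer-valued functions on words (lists over {..<n}),
  with pointwise addition and convolution (concatenation) product.\<close>

definition free_ring :: "nat \<Rightarrow> (nat list \<Rightarrow> int) ring" where
  "free_ring n =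
    \<lparr> carrier = {f. finite {w. f w \<noteq> 0} \<and> (\<forall>w. f w \<noteq> 0 \<longrightarrow> set w \<subseteq> {..<n})},
      mult = (\<lambda>f g w. \<Sum>i\<le>length w. f (take i w) * g (drop i w)),
      one = (\<lambda>w. if w = [] then 1 else 0),
      zero = (\<lambda>w. 0),
      add = (\<lambda>f g w. f w + g w) \<rparr>"

definition finitely_presented :: "('a, 'b) ring_scheme \<Rightarrow> bool" where
  "finitely_presented R \<longleftrightarrow>
     (\<exists>n G. finite G \<and> G \<subseteq> carrier (free_ring n) \<and>
        R \<simeq> (free_ring n Quot genideal (free_ring n) G))"

end

theory Submission
  imports Defs "HOL-Library.Countable_Set" "HOL-Algebra.Chinese_Remainder"
begin

definition conv :: "(nat list \<Rightarrow> int) \<Rightarrow> (nat list \<Rightarrow> int) \<Rightarrow> nat list \<Rightarrow> int" where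
  "conv f g = (\<lambda>w. \<Sum>i\<le>length w. f (take i w) * g (drop i w))"

definition fone :: "nat list \<Rightarrow> int" where "fone = (\<lambda>w. if w = [] then 1 else 0)"

definition FC :: "nat \<Rightarrow> (nat list \<Rightarrow> int) set" where
  "FC n = {f. finite {w. f w \<noteq> 0} \<and> (\<forall>w. f w \<noteq> 0 \<longrightarrow> set w \<subseteq> {..<n})}"

lemma fr_carrier: "carrier (free_ring n) = FC n" by (simp add: free_ring_def FC_def)
lemma fr_mult: "mult (free_ring n) = conv" by (simp add: free_ring_def conv_def fun_eq_iff)
lemma fr_one: "one (free_ring n) = fone" by (simp add: free_ring_def fone_def)
lemma fr_zero: "zero (free_ring n) = (\<lambda>w. 0)" by (simp add: free_ring_def)
lemma fr_add: "add (free_ring n) = (\<lambda>f g w. f w + g w)" by (simp add: free_ring_def)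

lemmas fr_defs = fr_carrier fr_mult fr_one fr_zero fr_add

lemma sum_tri_swap:
  fixes F :: "nat \<Rightarrow> nat \<Rightarrow> int"
  shows "(\<Sum>i\<le>L. \<Sum>j\<le>i. F j i) = (\<Sum>j\<le>L. \<Sum>k\<le>L - j. F j (j + k))"
proof -
  have "(\<Sum>i\<le>L. \<Sum>j\<le>i. F j i) = (\<Sum>i\<le>L. \<Sum>j\<le>i. (\<lambda>j k. F j (j+k)) j (i - j))"
    by (intro sum.cong refl) auto
  also have "\<dots> = (\<Sum>(j,k)\<in>{(j,k). j + k \<le> L}. F j (j+k))"
    by (rule sum.triangle_reindex_eq[symmetric])
  also have "{(j,k). j + k \<le> L} = Sigma {..L} (\<lambda>j. {..L-j})" by auto
  also have "(\<Sum>(j,k)\<in>Sigma {..L} (\<lambda>j. {..L-j}). F j (j+k)) = (\<Sum>j\<le>L. \<Sum>k\<le>L - j. F j (j + k))"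
    by (rule sum.Sigma[symmetric]) auto
  finally show ?thesis .
qed

lemma conv_assoc: "conv (conv f g) h = conv f (conv g h)"
proof
  fix w :: "nat list"
  let ?L = "length w"
  have "conv (conv f g) h w = (\<Sum>i\<le>?L. \<Sum>j\<le>i. f (take j w) * g (drop j (take i w)) * h (drop i w))"
    unfolding conv_def sum_distrib_right
  proof (rule sum.cong[OF refl])
    fix i assume "i \<in> {..?L}"
    then have li: "length (take i w) = i" by simp
    show "(\<Sum>j\<le>length (take i w). f (take j (take i w)) * g (drop j (take i w)) * h (drop i w)) =
          (\<Sum>j\<le>i. f (take j w) * g (drop j (take i w)) * h (drop i w))"
      unfolding li by (intro sum.cong refl) (simp add: min_def)
  qed
  also have "\<dots> = (\<Sum>j\<le>?L. \<Sum>k\<le>?L - j. f (take j w) * g (drop j (take (j+k) w)) * h (drop (j+k) w))"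
    by (rule sum_tri_swap)
  also have "\<dots> = conv f (conv g h) w"
    unfolding conv_def by (simp add: sum_distrib_left take_drop drop_drop add.commute mult.assoc)
  finally show "conv (conv f g) h w = conv f (conv g h) w" .
qed

lemma conv_fone_left: "conv fone f = f"
proof
  fix w
  have "conv fone f w = (\<Sum>i\<in>{0}. fone (take i w) * f (drop i w))"
    unfolding conv_def by (rule sum.mono_neutral_right) (auto simp: fone_def)
  then show "conv fone f w = f w" by (simp add: fone_def)
qed

lemma conv_fone_right: "conv f fone = f"
proof
  fix w
  have "conv f fone w = (\<Sum>i\<in>{length w}. f (take i w) * fone (drop i w))"
    unfolding conv_def by (rule sum.mono_neutral_right) (auto simp: fone_def)
  then show "conv f fone w = f w" by (simp add: fone_def)
qed

lemma conv_add_left: "conv (\<lambda>w. f w + g w) h = (\<lambda>w. conv f h w + conv g h w)"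
  by (simp add: conv_def fun_eq_iff distrib_right sum.distrib)

lemma conv_add_right: "conv h (\<lambda>w. f w + g w) = (\<lambda>w. conv h f w + conv h g w)"
  by (simp add: conv_def fun_eq_iff distrib_left sum.distrib)

lemma conv_supp: "{w. conv f g w \<noteq> 0} \<subseteq> (\<lambda>(u,v). u @ v) ` ({w. f w \<noteq> 0} \<times> {w. g w \<noteq> 0})"
proof
  fix w assume "w \<in> {w. conv f g w \<noteq> 0}"
  then have "(\<Sum>i\<le>length w. f (take i w) * g (drop i w)) \<noteq> 0" by (simp add: conv_def)
  then obtain i where "f (take i w) * g (drop i w) \<noteq> 0"
    by (meson sum.not_neutral_contains_not_neutral)
  then have "(take i w, drop i w) \<in> {w. f w \<noteq> 0} \<times> {w. g w \<noteq> 0}" by simp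
  moreover have "w = (\<lambda>(u,v). u @ v) (take i w, drop i w)" by simp
  ultimately show "w \<in> (\<lambda>(u,v). u @ v) ` ({w. f w \<noteq> 0} \<times> {w. g w \<noteq> 0})"
    by blast
qed

lemma conv_closed: assumes "f \<in> FC n" "g \<in> FC n" shows "conv f g \<in> FC n"
proof -
  have "finite {w. conv f g w \<noteq> 0}"
    using assms by (intro finite_subset[OF conv_supp] finite_imageI finite_cartesian_product) (auto simp: FC_def)
  moreover have "set w \<subseteq> {..<n}" if "conv f g w \<noteq> 0" for w
  proof -
    from that conv_supp[of f g] have "w \<in> (\<lambda>(u,v). u @ v) ` ({w. f w \<noteq> 0} \<times> {w. g w \<noteq> 0})" by blast
    then obtain u v where "f u \<noteq> 0" "g v \<noteq> 0" "w = u @ v" by auto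
    moreover have "set u \<subseteq> {..<n}" using assms(1) \<open>f u \<noteq> 0\<close> unfolding FC_def by blast
    moreover have "set v \<subseteq> {..<n}" using assms(2) \<open>g v \<noteq> 0\<close> unfolding FC_def by blast
    ultimately show ?thesis by simp

  qed
  ultimately show ?thesis by (simp add: FC_def)
qed

lemma fone_FC: "fone \<in> FC n" 
proof -
  have "{w. fone w \<noteq> 0} = {[]}" by (auto simp: fone_def)
  then show ?thesis unfolding FC_def by (simp add: fone_def)
qed

lemma add_FC: assumes "f \<in> FC n" "g \<in> FC n" shows "(\<lambda>w. f w + g w) \<in> FC n"
proof -
  have "{w. f w + g w \<noteq> 0} \<subseteq> {w. f w \<noteq> 0} \<union> {w. g w \<noteq> 0}" by auto
  moreover have "finite ({w. f w \<noteq> 0} \<union> {w. g w \<noteq> 0})" using assms unfolding FC_def by auto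
  ultimately have "finite {w. f w + g w \<noteq> 0}" by (rule finite_subset)
  moreover have "set w \<subseteq> {..<n}" if "f w + g w \<noteq> 0" for w
  proof (cases "f w = 0")
    case True then have "g w \<noteq> 0" using that by simp
    then show ?thesis using assms(2) unfolding FC_def by blast
  next
    case False then show ?thesis using assms(1) unfolding FC_def by blast
  qed
  ultimately show ?thesis unfolding FC_def by blast
qed

lemma neg_FC: assumes "f \<in> FC n" shows "(\<lambda>w. - f w) \<in> FC n"
  using assms unfolding FC_def by simp

lemma zero_FC: "(\<lambda>w. 0) \<in> FC n" unfolding FC_def by simp

lemma ring_free_ring: "ring (free_ring n)"
proof (rule ringI)
  show "abelian_group (free_ring n)"
    apply (rule abelian_groupI)
         apply (simp_all add: fr_defs add_FC zero_FC add_ac)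
    subgoal for x by (rule bexI[of _ "\<lambda>w. - x w"]) (simp_all add: neg_FC)
    done
  show "monoid (free_ring n)"
    by (rule monoidI) (simp_all add: fr_defs conv_closed fone_FC conv_assoc conv_fone_left conv_fone_right)
qed (simp_all add: fr_defs conv_add_left conv_add_right)

definition delta :: "nat list \<Rightarrow> nat list \<Rightarrow> int" where
  "delta u = (\<lambda>v. if v = u then 1 else 0)"
definition gen :: "nat \<Rightarrow> nat list \<Rightarrow> int" where "gen i = delta [i]"
definition smul :: "int \<Rightarrow> (nat list \<Rightarrow> int) \<Rightarrow> nat list \<Rightarrow> int" where
  "smul k f = (\<lambda>w. k * f w)"
definition cst :: "int \<Rightarrow> nat list \<Rightarrow> int" where "cst k = (\<lambda>w. if w = [] then k else 0)"

lemma FC_I: "finite {w. f w \<noteq> 0} \<Longrightarrow> (\<And>w. f w \<noteq> 0 \<Longrightarrow> set w \<subseteq> {..<n}) \<Longrightarrow> f \<in> FC n"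
  unfolding FC_def by blast
lemma FC_fin: "f \<in> FC n \<Longrightarrow> finite {w. f w \<noteq> 0}"
  unfolding FC_def by blast
lemma FC_set: "f \<in> FC n \<Longrightarrow> f w \<noteq> 0 \<Longrightarrow> set w \<subseteq> {..<n}"
  unfolding FC_def by blast

lemma delta_FC: "set u \<subseteq> {..<n} \<Longrightarrow> delta u \<in> FC n"
proof (rule FC_I)
  show "finite {w. delta u w \<noteq> 0}" by (simp add: delta_def)
qed (simp add: delta_def split: if_splits)

lemma gen_FC: "i < n \<Longrightarrow> gen i \<in> FC n"
  unfolding gen_def by (rule delta_FC) simp

lemma cst_FC: "cst k \<in> FC n"
proof (rule FC_I)
  show "finite {w. cst k w \<noteq> 0}"
    by (rule finite_subset[of _ "{[]}"]) (auto simp: cst_def)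
qed (simp add: cst_def split: if_splits)

lemma smul_FC: "f \<in> FC n \<Longrightarrow> smul k f \<in> FC n"
proof (rule FC_I)
  assume "f \<in> FC n"
  then show "finite {w. smul k f w \<noteq> 0}"
    by (intro finite_subset[OF _ FC_fin]) (auto simp: smul_def)
next
  fix w assume "f \<in> FC n" "smul k f w \<noteq> 0"
  then show "set w \<subseteq> {..<n}" by (intro FC_set[of f n]) (auto simp: smul_def)
qed

lemma conv_delta_delta: "conv (delta u) (delta v) = delta (u @ v)"
proof
  fix x
  show "conv (delta u) (delta v) x = delta (u @ v) x"
  proof (cases "x = u @ v")
    case True
    have "conv (delta u) (delta v) x = (\<Sum>i\<in>{length u}. delta u (take i x) * delta v (drop i x))"
      unfolding conv_def
    proof (rule sum.mono_neutral_right)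
      show "\<forall>i\<in>{..length x} - {length u}. delta u (take i x) * delta v (drop i x) = 0"
      proof
        fix i assume i: "i \<in> {..length x} - {length u}"
        have "take i x \<noteq> u"
        proof
          assume "take i x = u"
          then have "length (take i x) = length u" by simp
          then show False using i True by auto
        qed
        then show "delta u (take i x) * delta v (drop i x) = 0" by (simp add: delta_def)
      qed
    qed (auto simp: True)
    then show ?thesis by (simp add: delta_def True)
  next
    case False
    have "delta u (take i x) * delta v (drop i x) = 0" for i
    proof (cases "take i x = u \<and> drop i x = v")
      case True
      then have "x = u @ v" by (metis append_take_drop_id)
      then show ?thesis using False by simp
    next
      case False then show ?thesis by (auto simp: delta_def)
    qed
    then have "conv (delta u) (delta v) x = 0" unfolding conv_def by (intro sum.neutral) blast
    then show ?thesis using False by (simp add: delta_def)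
  qed
qed

lemma conv_cst: "conv (cst k) f = smul k f"
proof
  fix w
  have "conv (cst k) f w = (\<Sum>i\<in>{0}. cst k (take i w) * f (drop i w))"
    unfolding conv_def by (rule sum.mono_neutral_right) (auto simp: cst_def)
  then show "conv (cst k) f w = smul k f w" by (simp add: cst_def smul_def)
qed

lemma fr_neg: assumes "a \<in> FC n" shows "a_inv (free_ring n) a = (\<lambda>w. - a w)"
proof -
  interpret ring "free_ring n" by (rule ring_free_ring)
  show ?thesis
    by (rule minus_equality) (simp_all add: fr_defs assms neg_FC)
qed

lemma FC_decomp:
  assumes "finite A" "\<And>w. f w \<noteq> 0 \<Longrightarrow> w \<in> A"
    and "Q (\<lambda>w. 0)" and "\<And>g h. Q g \<Longrightarrow> Q h \<Longrightarrow> Q (\<lambda>w. g w + h w)"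
    and "\<And>w k. w \<in> A \<Longrightarrow> Q (smul k (delta w))"
  shows "Q f"
  using assms(1,2,5)
proof (induction A arbitrary: f rule: finite_induct)
  case empty
  then have "f = (\<lambda>w. 0)" by (metis empty_iff)
  then show ?case using assms(3) by simp
next
  case (insert a A)
  let ?g = "\<lambda>w. if w = a then 0 else f w"
  have "Q ?g"
  proof (rule insert.IH)
    show "\<And>w. ?g w \<noteq> 0 \<Longrightarrow> w \<in> A" using insert.prems(1) by (metis insert_iff)
    show "\<And>w k. w \<in> A \<Longrightarrow> Q (smul k (delta w))" using insert.prems(2) by blast
  qed
  moreover have "Q (smul (f a) (delta a))" using insert.prems(2) by blast
  ultimately have "Q (\<lambda>w. ?g w + smul (f a) (delta a) w)" by (rule assms(4))
  moreover have "(\<lambda>w. ?g w + smul (f a) (delta a) w) = f"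
    by (rule ext) (simp add: smul_def delta_def)
  ultimately show ?case by simp
qed

lemma fr_induct:
  fixes n :: nat
  defines "F \<equiv> free_ring n"
  assumes f: "f \<in> carrier F"
    and one: "P \<one>\<^bsub>F\<^esub>"
    and gens: "\<And>i. i < n \<Longrightarrow> P (gen i)"
    and add: "\<And>a b. a \<in> carrier F \<Longrightarrow> b \<in> carrier F \<Longrightarrow> P a \<Longrightarrow> P b \<Longrightarrow> P (a \<oplus>\<^bsub>F\<^esub> b)"
    and mul: "\<And>a b. a \<in> carrier F \<Longrightarrow> b \<in> carrier F \<Longrightarrow> P a \<Longrightarrow> P b \<Longrightarrow> P (a \<otimes>\<^bsub>F\<^esub> b)"
    and neg: "\<And>a. a \<in> carrier F \<Longrightarrow> P a \<Longrightarrow> P (\<ominus>\<^bsub>F\<^esub> a)"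
  shows "P f"
proof -
  interpret ring F unfolding F_def by (rule ring_free_ring)
  let ?Q = "\<lambda>g. g \<in> carrier F \<and> P g"
  have Qadd: "?Q (\<lambda>w. a w + b w)" if "?Q a" "?Q b" for a b
    using add[of a b] that by (simp add: F_def fr_defs add_FC)
  have Qmul: "?Q (conv a b)" if "?Q a" "?Q b" for a b
    using mul[of a b] that by (simp add: F_def fr_defs conv_closed)
  have Qneg: "?Q (\<lambda>w. - a w)" if "?Q a" for a
    using neg[of a] that by (simp add: F_def fr_defs fr_neg neg_FC)
  have Qone: "?Q fone" using one by (simp add: F_def fr_defs fone_FC)
  have Qzero: "?Q (\<lambda>w. 0)"
  proof -
    have "?Q (\<lambda>w. fone w + - fone w)" by (intro Qadd Qone Qneg)
    then show ?thesis by simp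
  qed
  have Qcst_nat: "?Q (cst (int k))" for k
  proof (induction k)
    case 0
    have "cst (int 0) = (\<lambda>w. 0)" by (simp add: cst_def fun_eq_iff)
    then show ?case using Qzero by simp
  next
    case (Suc k)
    have "cst (int (Suc k)) = (\<lambda>w. cst (int k) w + fone w)" by (simp add: cst_def fone_def fun_eq_iff)
    then show ?case using Qadd[OF Suc Qone] by simp
  qed
  have Qcst: "?Q (cst k)" for k
  proof (cases "k \<ge> 0")
    case True
    then show ?thesis using Qcst_nat[of "nat k"] by simp
  next
    case False
    have "cst k = (\<lambda>w. - cst (int (nat (-k))) w)" using False by (simp add: cst_def fun_eq_iff)
    have "?Q (\<lambda>w. - cst (int (nat (-k))) w)" by (rule Qneg[OF Qcst_nat])
    then show ?thesis using False \<open>cst k = _\<close> by simp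
  qed
  have Qdelta: "set w \<subseteq> {..<n} \<Longrightarrow> ?Q (delta w)" for w
  proof (induction w)
    case Nil
    have "delta [] = fone" by (simp add: delta_def fone_def fun_eq_iff)
    then show ?case using Qone by simp
  next
    case (Cons c w)
    have "?Q (gen c)" using gens[of c] Cons.prems by (simp add: F_def fr_defs gen_FC)
    then have "?Q (conv (gen c) (delta w))" using Cons by (intro Qmul) auto
    then show ?case by (simp add: gen_def conv_delta_delta)
  qed
  have fFC: "f \<in> FC n" using f by (simp add: F_def fr_defs)
  show ?thesis
  proof -
    have "?Q f"
    proof (rule FC_decomp[where A="{w. f w \<noteq> 0}"])
      show "finite {w. f w \<noteq> 0}" using fFC by (rule FC_fin)
      fix w k assume "w \<in> {w. f w \<noteq> 0}"
      then have "set w \<subseteq> {..<n}" using fFC FC_set by blast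
      then have "?Q (conv (cst k) (delta w))" by (intro Qmul Qcst Qdelta)
      then show "?Q (smul k (delta w))" by (simp add: conv_cst)
    qed (use Qzero Qadd in auto)
    then show ?thesis by simp
  qed
qed

lemma fr_hom_unique:
  assumes "ring T" "h1 \<in> ring_hom (free_ring n) T" "h2 \<in> ring_hom (free_ring n) T"
    and "\<And>i. i < n \<Longrightarrow> h1 (gen i) = h2 (gen i)"
    and "f \<in> carrier (free_ring n)"
  shows "h1 f = h2 f"
proof -
  interpret R: ring "free_ring n" by (rule ring_free_ring)
  interpret T: ring T by fact
  interpret H1: ring_hom_ring "free_ring n" T h1 by (intro ring_hom_ringI2 assms R.ring_axioms)
  interpret H2: ring_hom_ring "free_ring n" T h2 by (intro ring_hom_ringI2 assms R.ring_axioms)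
  show ?thesis
    by (rule fr_induct[of f n "\<lambda>f. h1 f = h2 f"]) (simp_all add: assms)
qed

definition mon :: "(nat \<Rightarrow> nat list \<Rightarrow> int) \<Rightarrow> nat list \<Rightarrow> nat list \<Rightarrow> int" where
  "mon q u = foldr (\<lambda>c acc. conv (q c) acc) u fone"

definition subst :: "(nat \<Rightarrow> nat list \<Rightarrow> int) \<Rightarrow> (nat list \<Rightarrow> int) \<Rightarrow> nat list \<Rightarrow> int" where
  "subst q f = (\<lambda>w. \<Sum>u\<in>{v. f v \<noteq> 0}. f u * mon q u w)"

lemma mon_Nil[simp]: "mon q [] = fone" by (simp add: mon_def)
lemma mon_Cons[simp]: "mon q (c # u) = conv (q c) (mon q u)" by (simp add: mon_def)

lemma subst_superset:
  assumes "finite A" "{v. f v \<noteq> 0} \<subseteq> A"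
  shows "subst q f w = (\<Sum>u\<in>A. f u * mon q u w)"
  unfolding subst_def by (rule sum.mono_neutral_left) (use assms in auto)

lemma sum_FC:
  assumes "finite A" "\<And>u. u \<in> A \<Longrightarrow> F u \<in> FC m"
  shows "(\<lambda>w. \<Sum>u\<in>A. c u * F u w) \<in> FC m"
  using assms
proof (induction A rule: finite_induct)
  case empty then show ?case using zero_FC by simp
next
  case (insert a A)
  have "(\<lambda>w. smul (c a) (F a) w + (\<Sum>u\<in>A. c u * F u w)) \<in> FC m"
    using insert by (intro add_FC smul_FC) auto
  then show ?case using insert by (simp add: smul_def)
qed

lemma mon_FC: "(\<And>c. c \<in> set u \<Longrightarrow> q c \<in> FC m) \<Longrightarrow> mon q u \<in> FC m"
  by (induction u) (simp_all add: fone_FC conv_closed)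

lemma subst_FC:
  assumes "f \<in> FC n" "\<And>c. c < n \<Longrightarrow> q c \<in> FC m"
  shows "subst q f \<in> FC m"
proof -
  have "(\<lambda>w. \<Sum>u\<in>{v. f v \<noteq> 0}. f u * mon q u w) \<in> FC m"
  proof (rule sum_FC)
    show "finite {v. f v \<noteq> 0}" using assms(1) by (rule FC_fin)
    fix u assume "u \<in> {v. f v \<noteq> 0}"
    then have "set u \<subseteq> {..<n}" using assms(1) FC_set by blast
    then show "mon q u \<in> FC m" using assms(2) by (intro mon_FC) auto
  qed
  then show ?thesis by (simp add: subst_def)
qed

lemma subst_add:
  assumes "finite {v. f v \<noteq> 0}" "finite {v. g v \<noteq> 0}"
  shows "subst q (\<lambda>w. f w + g w) = (\<lambda>w. subst q f w + subst q g w)"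
proof
  fix w
  let ?A = "{v. f v \<noteq> 0} \<union> {v. g v \<noteq> 0}"
  have fA: "finite ?A" using assms by simp
  have "subst q (\<lambda>w. f w + g w) w = (\<Sum>u\<in>?A. (f u + g u) * mon q u w)"
    by (rule subst_superset[OF fA]) auto
  also have "\<dots> = (\<Sum>u\<in>?A. f u * mon q u w) + (\<Sum>u\<in>?A. g u * mon q u w)"
    by (simp add: distrib_right sum.distrib)
  also have "\<dots> = subst q f w + subst q g w"
    by (simp add: subst_superset[OF fA])
  finally show "subst q (\<lambda>w. f w + g w) w = subst q f w + subst q g w" .
qed

lemma subst_neg: "subst q (\<lambda>w. - f w) = (\<lambda>w. - subst q f w)"
  by (simp add: subst_def fun_eq_iff sum_negf)

lemma subst_one: "subst q fone = fone"
proof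
  fix w
  have "subst q fone w = (\<Sum>u\<in>{[]}. fone u * mon q u w)"
    by (rule subst_superset) (auto simp: fone_def)
  then show "subst q fone w = fone w" by (simp add: fone_def)
qed

lemma conv_lin_right:
  assumes "finite A"
  shows "conv h (\<lambda>w. \<Sum>u\<in>A. a u * F u w) = (\<lambda>w. \<Sum>u\<in>A. a u * conv h (F u) w)"
proof
  fix w
  have "conv h (\<lambda>w. \<Sum>u\<in>A. a u * F u w) w = (\<Sum>i\<le>length w. \<Sum>u\<in>A. a u * (h (take i w) * F u (drop i w)))"
    unfolding conv_def by (simp add: sum_distrib_left mult.left_commute)
  also have "\<dots> = (\<Sum>u\<in>A. \<Sum>i\<le>length w. a u * (h (take i w) * F u (drop i w)))"
    by (rule sum.swap)
  also have "\<dots> = (\<Sum>u\<in>A. a u * conv h (F u) w)"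
    unfolding conv_def by (simp add: sum_distrib_left)
  finally show "conv h (\<lambda>w. \<Sum>u\<in>A. a u * F u w) w = (\<Sum>u\<in>A. a u * conv h (F u) w)" .
qed

lemma conv_gen_left:
  "conv (gen c) g w = (case w of [] \<Rightarrow> 0 | d # v \<Rightarrow> if d = c then g v else 0)"
proof (cases w)
  case Nil
  then show ?thesis by (simp add: conv_def gen_def delta_def)
next
  case (Cons d v)
  have "conv (gen c) g w = (\<Sum>i\<in>{1}. gen c (take i w) * g (drop i w))"
    unfolding conv_def
  proof (rule sum.mono_neutral_right)
    show "\<forall>i\<in>{..length w} - {1}. gen c (take i w) * g (drop i w) = 0"
    proof
      fix i assume i: "i \<in> {..length w} - {1}"
      have "take i w \<noteq> [c]"
      proof
        assume "take i w = [c]"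
        then have "length (take i w) = 1" by simp
        then show False using i Cons by auto
      qed
      then show "gen c (take i w) * g (drop i w) = 0" by (simp add: gen_def delta_def)
    qed
  qed (auto simp: Cons)
  then show ?thesis by (simp add: Cons gen_def delta_def)
qed

lemma subst_conv_gen:
  assumes "finite {v. g v \<noteq> 0}"
  shows "subst q (conv (gen c) g) = conv (q c) (subst q g)"
proof
  fix w
  let ?S = "{v. g v \<noteq> 0}"
  have sup: "{v. conv (gen c) g v \<noteq> 0} \<subseteq> Cons c ` ?S"
  proof
    fix v assume "v \<in> {v. conv (gen c) g v \<noteq> 0}"
    then have "conv (gen c) g v \<noteq> 0" by simp
    then show "v \<in> Cons c ` ?S"
      by (cases v) (auto simp: conv_gen_left split: if_splits)
  qed
  have "subst q (conv (gen c) g) w = (\<Sum>u\<in>Cons c ` ?S. conv (gen c) g u * mon q u w)"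
    by (rule subst_superset[OF _ sup]) (use assms in simp)
  also have "\<dots> = (\<Sum>v\<in>?S. conv (gen c) g (c # v) * mon q (c # v) w)"
    by (rule sum.reindex[unfolded comp_def]) simp
  also have "\<dots> = (\<Sum>v\<in>?S. g v * conv (q c) (mon q v) w)"
    by (simp add: conv_gen_left)
  also have "\<dots> = conv (q c) (\<lambda>w. \<Sum>v\<in>?S. g v * mon q v w) w"
    by (simp add: conv_lin_right[OF assms])
  also have "\<dots> = conv (q c) (subst q g) w"
    by (simp add: subst_def)
  finally show "subst q (conv (gen c) g) w = conv (q c) (subst q g) w" .
qed

lemma subst_gen: "subst q (gen c) = q c"
proof
  fix w
  have "subst q (gen c) w = (\<Sum>u\<in>{[c]}. gen c u * mon q u w)"
    by (rule subst_superset) (auto simp: gen_def delta_def)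
  then show "subst q (gen c) w = q c w" by (simp add: gen_def delta_def conv_fone_right)
qed

lemma subst_conv:
  assumes f: "f \<in> FC n" and q: "\<And>c. c < n \<Longrightarrow> q c \<in> FC m"
  shows "\<forall>g \<in> FC n. subst q (conv f g) = conv (subst q f) (subst q g)"
proof (rule fr_induct[of f n])
  show "f \<in> carrier (free_ring n)" using f by (simp add: fr_defs)
next
  show "\<forall>g\<in>FC n. subst q (conv \<one>\<^bsub>free_ring n\<^esub> g) = conv (subst q \<one>\<^bsub>free_ring n\<^esub>) (subst q g)"
    by (simp add: fr_defs subst_one conv_fone_left)
next
  fix i assume "i < n"
  show "\<forall>g\<in>FC n. subst q (conv (gen i) g) = conv (subst q (gen i)) (subst q g)"
  proof
    fix g assume "g \<in> FC n"
    then show "subst q (conv (gen i) g) = conv (subst q (gen i)) (subst q g)"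
      by (simp add: subst_conv_gen FC_fin subst_gen)
  qed
next
  fix a b
  assume a: "a \<in> carrier (free_ring n)" and b: "b \<in> carrier (free_ring n)"
    and IHa: "\<forall>g\<in>FC n. subst q (conv a g) = conv (subst q a) (subst q g)"
    and IHb: "\<forall>g\<in>FC n. subst q (conv b g) = conv (subst q b) (subst q g)"
  have aF: "a \<in> FC n" and bF: "b \<in> FC n" using a b by (simp_all add: fr_defs)
  show "\<forall>g\<in>FC n. subst q (conv (a \<oplus>\<^bsub>free_ring n\<^esub> b) g) = conv (subst q (a \<oplus>\<^bsub>free_ring n\<^esub> b)) (subst q g)"
  proof
    fix g assume g: "g \<in> FC n"
    have "subst q (conv (\<lambda>w. a w + b w) g) = subst q (\<lambda>w. conv a g w + conv b g w)"
      by (simp add: conv_add_left)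
    also have "\<dots> = (\<lambda>w. subst q (conv a g) w + subst q (conv b g) w)"
      by (intro subst_add FC_fin[of _ n] conv_closed aF bF g)
    also have "\<dots> = (\<lambda>w. conv (subst q a) (subst q g) w + conv (subst q b) (subst q g) w)"
      using IHa IHb g by simp
    also have "\<dots> = conv (\<lambda>w. subst q a w + subst q b w) (subst q g)"
      by (simp add: conv_add_left)
    also have "\<dots> = conv (subst q (\<lambda>w. a w + b w)) (subst q g)"
      using subst_add[OF FC_fin[OF aF] FC_fin[OF bF], of q] by simp
    finally show "subst q (conv (a \<oplus>\<^bsub>free_ring n\<^esub> b) g) = conv (subst q (a \<oplus>\<^bsub>free_ring n\<^esub> b)) (subst q g)"
      by (simp add: fr_defs)
  qed
  show "\<forall>g\<in>FC n. subst q (conv (a \<otimes>\<^bsub>free_ring n\<^esub> b) g) = conv (subst q (a \<otimes>\<^bsub>free_ring n\<^esub> b)) (subst q g)"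
  proof
    fix g assume g: "g \<in> FC n"
    have "subst q (conv (conv a b) g) = subst q (conv a (conv b g))"
      by (simp add: conv_assoc)
    also have "\<dots> = conv (subst q a) (subst q (conv b g))"
      using IHa conv_closed[OF bF g] by simp
    also have "\<dots> = conv (subst q a) (conv (subst q b) (subst q g))"
      using IHb g by simp
    also have "\<dots> = conv (conv (subst q a) (subst q b)) (subst q g)"
      by (simp add: conv_assoc)
    also have "\<dots> = conv (subst q (conv a b)) (subst q g)"
      using IHa bF by simp
    finally show "subst q (conv (a \<otimes>\<^bsub>free_ring n\<^esub> b) g) = conv (subst q (a \<otimes>\<^bsub>free_ring n\<^esub> b)) (subst q g)"
      by (simp add: fr_defs)
  qed
next
  fix a
  assume a: "a \<in> carrier (free_ring n)"
    and IHa: "\<forall>g\<in>FC n. subst q (conv a g) = conv (subst q a) (subst q g)"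
  have aF: "a \<in> FC n" using a by (simp add: fr_defs)
  have cneg: "conv (\<lambda>w. - h w) g = (\<lambda>w. - conv h g w)" for h g :: "nat list \<Rightarrow> int"
    by (simp add: conv_def fun_eq_iff sum_negf)
  show "\<forall>g\<in>FC n. subst q (conv (\<ominus>\<^bsub>free_ring n\<^esub> a) g) = conv (subst q (\<ominus>\<^bsub>free_ring n\<^esub> a)) (subst q g)"
    using IHa by (simp add: fr_neg[OF aF] cneg subst_neg)
qed

lemma subst_hom:
  assumes q: "\<And>c. c < n \<Longrightarrow> q c \<in> FC m"
  shows "subst q \<in> ring_hom (free_ring n) (free_ring m)"
proof (rule ring_hom_memI)
  fix x assume "x \<in> carrier (free_ring n)"
  then show "subst q x \<in> carrier (free_ring m)" using q by (simp add: fr_defs subst_FC)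
next
  fix x y assume "x \<in> carrier (free_ring n)" "y \<in> carrier (free_ring n)"
  then show "subst q (x \<otimes>\<^bsub>free_ring n\<^esub> y) = subst q x \<otimes>\<^bsub>free_ring m\<^esub> subst q y"
    using subst_conv[OF _ q] by (simp add: fr_defs)
next
  fix x y assume "x \<in> carrier (free_ring n)" "y \<in> carrier (free_ring n)"
  then show "subst q (x \<oplus>\<^bsub>free_ring n\<^esub> y) = subst q x \<oplus>\<^bsub>free_ring m\<^esub> subst q y"
    by (simp add: fr_defs subst_add FC_fin)
next
  show "subst q \<one>\<^bsub>free_ring n\<^esub> = \<one>\<^bsub>free_ring m\<^esub>" by (simp add: fr_defs subst_one)
qed

lemma fr_ideal_FC: "ideal I (free_ring n) \<Longrightarrow> x \<in> I \<Longrightarrow> x \<in> FC n"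
  using ideal.Icarr[of I "free_ring n" x] by (simp add: fr_defs)

lemma fr_ideal_add: "ideal I (free_ring n) \<Longrightarrow> x \<in> I \<Longrightarrow> y \<in> I \<Longrightarrow> (\<lambda>w. x w + y w) \<in> I"
  using additive_subgroup.a_closed[OF ideal.axioms(1), of I "free_ring n" x y] by (simp add: fr_defs)

lemma fr_ideal_neg: "ideal I (free_ring n) \<Longrightarrow> x \<in> I \<Longrightarrow> (\<lambda>w. - x w) \<in> I"
  using additive_subgroup.a_inv_closed[OF ideal.axioms(1), of I "free_ring n" x]
  by (simp add: fr_neg fr_ideal_FC)

lemma fr_ideal_lmul: "ideal I (free_ring n) \<Longrightarrow> x \<in> I \<Longrightarrow> y \<in> FC n \<Longrightarrow> conv y x \<in> I"
  using ideal.I_l_closed[of I "free_ring n" x y] by (simp add: fr_defs)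

lemma fr_ideal_rmul: "ideal I (free_ring n) \<Longrightarrow> x \<in> I \<Longrightarrow> y \<in> FC n \<Longrightarrow> conv x y \<in> I"
  using ideal.I_r_closed[of I "free_ring n" x y] by (simp add: fr_defs)

lemma fr_ideal_zero: "ideal I (free_ring n) \<Longrightarrow> (\<lambda>w. 0) \<in> I"
  using additive_subgroup.zero_closed[OF ideal.axioms(1), of I "free_ring n"] by (simp add: fr_defs)

lemma conv_diff_left: "conv (\<lambda>w. f w - g w) h = (\<lambda>w. conv f h w - conv g h w)"
  by (simp add: conv_def fun_eq_iff left_diff_distrib sum_subtractf)

lemma conv_diff_right: "conv h (\<lambda>w. f w - g w) = (\<lambda>w. conv h f w - conv h g w)"
  by (simp add: conv_def fun_eq_iff right_diff_distrib sum_subtractf)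

lemma chain_finite_subset:
  assumes "finite D" "D \<subseteq> (\<Union>k. K k)" "\<And>k. K k \<subseteq> K (Suc k)"
  shows "\<exists>k. D \<subseteq> K (k::nat)"
  using assms(1,2)
proof (induction D rule: finite_induct)
  case empty then show ?case by simp
next
  case (insert a D)
  then obtain k where k: "D \<subseteq> K k" by auto
  from insert.prems obtain j where j: "a \<in> K j" by auto
  have mono: "K i \<subseteq> K l" if "i \<le> l" for i l
    using lift_Suc_mono_le[of K, OF assms(3) that] .
  have "insert a D \<subseteq> K (max k j)"
    using k j mono[of k "max k j"] mono[of j "max k j"] by auto
  then show ?case by blast
qed

lemma hom_genideal_subset:
  assumes "ring R" "ring S" "h \<in> ring_hom R S" "G \<subseteq> carrier R" "ideal J S" "h ` G \<subseteq> J"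
  shows "h ` genideal R G \<subseteq> J"
proof -
  interpret H: ring_hom_ring R S h by (intro ring_hom_ringI2 assms)
  have "ideal {r \<in> carrier R. h r \<in> J} R" by (rule H.ideal_vimage[OF assms(5)])
  then have "genideal R G \<subseteq> {r \<in> carrier R. h r \<in> J}"
    using assms(4,6) by (intro H.R.genideal_minimal) auto
  then show ?thesis by auto
qed

lemma hom_minus:
  assumes "ring R" "ring S" "h \<in> ring_hom R S" "x \<in> carrier R" "y \<in> carrier R"
  shows "h (x \<ominus>\<^bsub>R\<^esub> y) = h x \<ominus>\<^bsub>S\<^esub> h y"
proof -
  interpret H: ring_hom_ring R S h by (intro ring_hom_ringI2 assms)
  show ?thesis using assms(4,5) by (simp add: a_minus_def)
qed

lemma hom_neg:
  assumes "ring R" "ring S" "h \<in> ring_hom R S" "x \<in> carrier R"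
  shows "h (\<ominus>\<^bsub>R\<^esub> x) = \<ominus>\<^bsub>S\<^esub> h x"
proof -
  interpret H: ring_hom_ring R S h by (intro ring_hom_ringI2 assms)
  show ?thesis using assms(4) by simp
qed

lemma not_fp_aux:
  assumes T: "ring T"
    and phi: "\<phi> \<in> ring_hom (free_ring m) T" "\<phi> ` carrier (free_ring m) = carrier T"
    and K: "\<And>k. ideal (K k) (free_ring m)" "\<And>k. K k \<subseteq> K (Suc k)"
      "a_kernel (free_ring m) T \<phi> = (\<Union>k. K k)" "\<And>k. K k \<noteq> a_kernel (free_ring m) T \<phi>"
    and psi: "\<psi> \<in> ring_hom (free_ring n) T" "\<psi> ` carrier (free_ring n) = carrier T"
      "a_kernel (free_ring n) T \<psi> = genideal (free_ring n) G" "finite G" "G \<subseteq> carrier (free_ring n)"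
  shows False
proof -
  interpret T: ring T by fact
  interpret Fm: ring "free_ring m" by (rule ring_free_ring)
  interpret Fn: ring "free_ring n" by (rule ring_free_ring)
  define q where "q i = (SOME x. x \<in> carrier (free_ring m) \<and> \<phi> x = \<psi> (gen i))" for i
  have q: "q i \<in> FC m \<and> \<phi> (q i) = \<psi> (gen i)" if "i < n" for i
  proof -
    have "\<psi> (gen i) \<in> carrier T"
      using ring_hom_closed[OF psi(1)] gen_FC[OF that] by (simp only: fr_defs)
    then have "\<psi> (gen i) \<in> \<phi> ` carrier (free_ring m)" using phi(2) by simp
    then obtain x where "x \<in> carrier (free_ring m)" "\<psi> (gen i) = \<phi> x" by (rule imageE)
    then have "\<exists>x. x \<in> carrier (free_ring m) \<and> \<phi> x = \<psi> (gen i)" by (intro exI[of _ x] conjI) simp_all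
    then have "q i \<in> carrier (free_ring m) \<and> \<phi> (q i) = \<psi> (gen i)" unfolding q_def by (rule someI_ex)
    then show ?thesis by (simp add: fr_defs)
  qed
  define r where "r j = (SOME x. x \<in> carrier (free_ring n) \<and> \<psi> x = \<phi> (gen j))" for j
  have r: "r j \<in> FC n \<and> \<psi> (r j) = \<phi> (gen j)" if "j < m" for j
  proof -
    have "\<phi> (gen j) \<in> carrier T"
      using ring_hom_closed[OF phi(1)] gen_FC[OF that] by (simp only: fr_defs)
    then have "\<phi> (gen j) \<in> \<psi> ` carrier (free_ring n)" using psi(2) by simp
    then obtain x where "x \<in> carrier (free_ring n)" "\<phi> (gen j) = \<psi> x" by (rule imageE)
    then have "\<exists>x. x \<in> carrier (free_ring n) \<and> \<psi> x = \<phi> (gen j)" by (intro exI[of _ x] conjI) simp_all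
    then have "r j \<in> carrier (free_ring n) \<and> \<psi> (r j) = \<phi> (gen j)" unfolding r_def by (rule someI_ex)
    then show ?thesis by (simp add: fr_defs)
  qed
  have alpha: "subst q \<in> ring_hom (free_ring n) (free_ring m)" using q by (intro subst_hom) auto
  have beta: "subst r \<in> ring_hom (free_ring m) (free_ring n)" using r by (intro subst_hom) auto
  have phialpha: "\<phi> (subst q f) = \<psi> f" if "f \<in> carrier (free_ring n)" for f
    using fr_hom_unique[OF T ring_hom_trans[OF alpha phi(1)] psi(1) _ that]
    by (simp add: subst_gen q)
  have psibeta: "\<psi> (subst r f) = \<phi> f" if "f \<in> carrier (free_ring m)" for f
    using fr_hom_unique[OF T ring_hom_trans[OF beta psi(1)] phi(1) _ that]
    by (simp add: subst_gen r)
  define \<gamma> where "\<gamma> = subst q \<circ> subst r"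
  have gamma: "\<gamma> \<in> ring_hom (free_ring m) (free_ring m)"
    unfolding \<gamma>_def by (rule ring_hom_trans[OF beta alpha])
  have phigamma: "\<phi> (\<gamma> f) = \<phi> f" if "f \<in> carrier (free_ring m)" for f
    unfolding \<gamma>_def using that phialpha psibeta ring_hom_closed[OF beta] by simp
  define D where "D = (\<lambda>j. (\<lambda>w. gen j w - \<gamma> (gen j) w)) ` {..<m} \<union> subst q ` G"
  have kerphi: "x \<in> a_kernel (free_ring m) T \<phi> \<longleftrightarrow> x \<in> FC m \<and> \<phi> x = \<zero>\<^bsub>T\<^esub>" for x
    by (simp add: a_kernel_def' fr_defs)
  have minus_m: "a \<ominus>\<^bsub>free_ring m\<^esub> b = (\<lambda>w. a w - b w)" if "a \<in> FC m" "b \<in> FC m" for a b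
    using that by (simp add: a_minus_def fr_neg) (simp add: fr_defs)
  have gammaFC: "\<gamma> f \<in> FC m" if "f \<in> FC m" for f
    using ring_hom_closed[OF gamma] that by (simp add: fr_defs)
  have "D \<subseteq> a_kernel (free_ring m) T \<phi>"
  proof
    fix x assume "x \<in> D"
    then consider (a) j where "j < m" "x = (\<lambda>w. gen j w - \<gamma> (gen j) w)" | (b) g where "g \<in> G" "x = subst q g"
      unfolding D_def by auto
    then show "x \<in> a_kernel (free_ring m) T \<phi>"
    proof cases
      case a
      have gj: "gen j \<in> FC m" using a gen_FC by simp
      have "x = gen j \<ominus>\<^bsub>free_ring m\<^esub> \<gamma> (gen j)" using a minus_m gj gammaFC by simp
      then have "\<phi> x = \<phi> (gen j) \<ominus>\<^bsub>T\<^esub> \<phi> (\<gamma> (gen j))"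
        using hom_minus[OF Fm.ring_axioms T phi(1), of "gen j" "\<gamma> (gen j)"] gj gammaFC[OF gj]
        by (simp only: fr_defs)
      also have "\<dots> = \<zero>\<^bsub>T\<^esub>" using phigamma[of "gen j"] gj ring_hom_closed[OF phi(1)]
        by (simp add: fr_defs)
      finally have "\<phi> x = \<zero>\<^bsub>T\<^esub>" .
      moreover have "x \<in> carrier (free_ring m)" using \<open>x = _ \<ominus>\<^bsub>_\<^esub> _\<close> gj gammaFC
        by (simp add: fr_carrier[symmetric])
      ultimately show ?thesis by (simp add: a_kernel_def')
    next
      case b
      have "g \<in> carrier (free_ring n)" using b psi(5) by auto
      moreover have "\<psi> g = \<zero>\<^bsub>T\<^esub>" using b psi(3) Fn.genideal_self[OF psi(5)]
        by (auto simp: a_kernel_def')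
      ultimately show ?thesis using b phialpha ring_hom_closed[OF alpha] by (simp add: a_kernel_def')
    qed
  qed
  moreover have "finite D" unfolding D_def using psi(4) by simp
  ultimately obtain k where Dk: "D \<subseteq> K k"
    using chain_finite_subset[of D K] K(2,3) by auto
  have Kk: "ideal (K k) (free_ring m)" by (rule K(1))
  have step1: "subst q ` genideal (free_ring n) G \<subseteq> K k"
    by (rule hom_genideal_subset[OF Fn.ring_axioms Fm.ring_axioms alpha psi(5) Kk]) (use Dk D_def in auto)
  have step2: "(\<lambda>w. z w - \<gamma> z w) \<in> K k" if "z \<in> carrier (free_ring m)" for z
  proof (rule fr_induct[of z m "\<lambda>z. (\<lambda>w. z w - \<gamma> z w) \<in> K k"])
    show "z \<in> carrier (free_ring m)" by fact
  next
    have "\<gamma> \<one>\<^bsub>free_ring m\<^esub> = \<one>\<^bsub>free_ring m\<^esub>" using gamma by (rule ring_hom_one)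
    then show "(\<lambda>w. \<one>\<^bsub>free_ring m\<^esub> w - \<gamma> \<one>\<^bsub>free_ring m\<^esub> w) \<in> K k"
      using fr_ideal_zero[OF Kk] by simp
  next
    fix i assume "i < m"
    then show "(\<lambda>w. gen i w - \<gamma> (gen i) w) \<in> K k" using Dk D_def by auto
  next
    fix a b assume ab: "a \<in> carrier (free_ring m)" "b \<in> carrier (free_ring m)"
      and IH: "(\<lambda>w. a w - \<gamma> a w) \<in> K k" "(\<lambda>w. b w - \<gamma> b w) \<in> K k"
    have "\<gamma> (a \<oplus>\<^bsub>free_ring m\<^esub> b) = \<gamma> a \<oplus>\<^bsub>free_ring m\<^esub> \<gamma> b" using gamma ab by (rule ring_hom_add)
    then have e: "(\<lambda>w. (a \<oplus>\<^bsub>free_ring m\<^esub> b) w - \<gamma> (a \<oplus>\<^bsub>free_ring m\<^esub> b) w) = (\<lambda>w. (a w - \<gamma> a w) + (b w - \<gamma> b w))"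
      by (simp add: fr_defs fun_eq_iff)
    show "(\<lambda>w. (a \<oplus>\<^bsub>free_ring m\<^esub> b) w - \<gamma> (a \<oplus>\<^bsub>free_ring m\<^esub> b) w) \<in> K k"
      unfolding e by (rule fr_ideal_add[OF Kk IH])
    have "\<gamma> (a \<otimes>\<^bsub>free_ring m\<^esub> b) = \<gamma> a \<otimes>\<^bsub>free_ring m\<^esub> \<gamma> b" using gamma ab by (rule ring_hom_mult)
    then have e2: "(\<lambda>w. (a \<otimes>\<^bsub>free_ring m\<^esub> b) w - \<gamma> (a \<otimes>\<^bsub>free_ring m\<^esub> b) w) =
        (\<lambda>w. conv (\<lambda>w. a w - \<gamma> a w) b w + conv (\<gamma> a) (\<lambda>w. b w - \<gamma> b w) w)"
      by (simp add: fr_defs fun_eq_iff conv_diff_left conv_diff_right)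
    have aF: "a \<in> FC m" "b \<in> FC m" using ab by (simp_all add: fr_defs)
    show "(\<lambda>w. (a \<otimes>\<^bsub>free_ring m\<^esub> b) w - \<gamma> (a \<otimes>\<^bsub>free_ring m\<^esub> b) w) \<in> K k"
      unfolding e2 by (intro fr_ideal_add[OF Kk] fr_ideal_rmul[OF Kk] fr_ideal_lmul[OF Kk] IH aF gammaFC)
  next
    fix a assume a: "a \<in> carrier (free_ring m)" and IH: "(\<lambda>w. a w - \<gamma> a w) \<in> K k"
    have aF: "a \<in> FC m" using a by (simp add: fr_defs)
    have "\<gamma> (\<ominus>\<^bsub>free_ring m\<^esub> a) = \<ominus>\<^bsub>free_ring m\<^esub> \<gamma> a"
      using hom_neg[OF Fm.ring_axioms Fm.ring_axioms gamma a] .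
    then have e: "(\<lambda>w. (\<ominus>\<^bsub>free_ring m\<^esub> a) w - \<gamma> (\<ominus>\<^bsub>free_ring m\<^esub> a) w) = (\<lambda>w. - (a w - \<gamma> a w))"
      using aF gammaFC[OF aF] by (simp add: fr_neg fun_eq_iff)
    show "(\<lambda>w. (\<ominus>\<^bsub>free_ring m\<^esub> a) w - \<gamma> (\<ominus>\<^bsub>free_ring m\<^esub> a) w) \<in> K k"
      unfolding e by (rule fr_ideal_neg[OF Kk IH])
  qed
  have "a_kernel (free_ring m) T \<phi> \<subseteq> K k"
  proof
    fix z assume z: "z \<in> a_kernel (free_ring m) T \<phi>"
    then have zc: "z \<in> carrier (free_ring m)" and z0: "\<phi> z = \<zero>\<^bsub>T\<^esub>" by (simp_all add: a_kernel_def')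
    have bz: "subst r z \<in> carrier (free_ring n)" using ring_hom_closed[OF beta zc] .
    have "\<psi> (subst r z) = \<zero>\<^bsub>T\<^esub>" using psibeta[OF zc] z0 by simp
    then have "subst r z \<in> a_kernel (free_ring n) T \<psi>" using bz by (simp add: a_kernel_def')
    then have "subst r z \<in> genideal (free_ring n) G" using psi(3) by simp
    then have "subst q (subst r z) \<in> subst q ` genideal (free_ring n) G" by (rule imageI)
    then have "\<gamma> z \<in> K k" using step1 unfolding \<gamma>_def comp_def by (rule rev_subsetD)
    then have "(\<lambda>w. (z w - \<gamma> z w) + \<gamma> z w) \<in> K k" by (intro fr_ideal_add[OF Kk] step2 zc)
    then show "z \<in> K k" by simp
  qed
  moreover have "K k \<subseteq> a_kernel (free_ring m) T \<phi>" unfolding K(3) by (rule UN_upper) (rule UNIV_I)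
  ultimately have "K k = a_kernel (free_ring m) T \<phi>" by (intro subset_antisym)
  then show False using K(4)[of k] by (rule notE[rotated])
qed

lemma fr_idealI:
  assumes "I \<subseteq> FC n" "(\<lambda>w. 0) \<in> I"
    and "\<And>x y. x \<in> I \<Longrightarrow> y \<in> I \<Longrightarrow> (\<lambda>w. x w + y w) \<in> I"
    and "\<And>x. x \<in> I \<Longrightarrow> (\<lambda>w. - x w) \<in> I"
    and "\<And>x y. x \<in> I \<Longrightarrow> y \<in> FC n \<Longrightarrow> conv y x \<in> I"
    and "\<And>x y. x \<in> I \<Longrightarrow> y \<in> FC n \<Longrightarrow> conv x y \<in> I"
  shows "ideal I (free_ring n)"
proof -
  interpret R: ring "free_ring n" by (rule ring_free_ring)
  have "subgroup I (add_monoid (free_ring n))"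
  proof (rule subgroup.intro)
    show "I \<subseteq> carrier (add_monoid (free_ring n))" using assms(1) by (simp add: fr_defs)
    show "\<one>\<^bsub>add_monoid (free_ring n)\<^esub> \<in> I" using assms(2) by (simp add: fr_defs)
    fix a assume a: "a \<in> I"
    then have "a \<in> FC n" using assms(1) by blast
    then have "inv\<^bsub>add_monoid (free_ring n)\<^esub> a = (\<lambda>w. - a w)"
      using fr_neg[of a n] by (simp add: a_inv_def)
    then show "inv\<^bsub>add_monoid (free_ring n)\<^esub> a \<in> I" using assms(4)[OF a] by simp
  next
    fix a b assume "a \<in> I" "b \<in> I"
    then show "a \<otimes>\<^bsub>add_monoid (free_ring n)\<^esub> b \<in> I" using assms(3) by (simp add: fr_defs)
  qed
  then show ?thesis
    by (rule idealI[OF R.ring_axioms]) (simp_all add: fr_defs assms(5,6))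
qed

definition hasfac :: "nat list set \<Rightarrow> nat list \<Rightarrow> bool" where
  "hasfac M w \<longleftrightarrow> (\<exists>p m s. m \<in> M \<and> w = p @ m @ s)"

definition MI :: "nat \<Rightarrow> nat list set \<Rightarrow> (nat list \<Rightarrow> int) set" where
  "MI n M = {f \<in> FC n. \<forall>w. f w \<noteq> 0 \<longrightarrow> hasfac M w}"

lemma hasfac_append_left: "hasfac M v \<Longrightarrow> hasfac M (u @ v)"
  unfolding hasfac_def by (metis append.assoc)

lemma hasfac_append_right: "hasfac M u \<Longrightarrow> hasfac M (u @ v)"
  unfolding hasfac_def by (metis append.assoc)

lemma MI_ideal: "ideal (MI n M) (free_ring n)"
proof (rule fr_idealI)
  show "MI n M \<subseteq> FC n" unfolding MI_def by blast
  show "(\<lambda>w. 0) \<in> MI n M" unfolding MI_def by (simp add: zero_FC)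
next
  fix x y assume x: "x \<in> MI n M" and y: "y \<in> MI n M"
  have "hasfac M w" if "x w + y w \<noteq> 0" for w
  proof (cases "x w = 0")
    case True then have "y w \<noteq> 0" using that by simp
    then show ?thesis using y unfolding MI_def by blast
  next
    case False then show ?thesis using x unfolding MI_def by blast
  qed
  moreover have "(\<lambda>w. x w + y w) \<in> FC n" using x y unfolding MI_def by (intro add_FC) simp_all
  ultimately show "(\<lambda>w. x w + y w) \<in> MI n M" unfolding MI_def by simp
next
  fix x assume x: "x \<in> MI n M"
  then show "(\<lambda>w. - x w) \<in> MI n M" unfolding MI_def by (simp add: neg_FC)
next
  fix x y assume x: "x \<in> MI n M" and y: "y \<in> FC n"
  have xF: "x \<in> FC n" using x unfolding MI_def by simp
  have "hasfac M w" if "conv y x w \<noteq> 0" for w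
  proof -
    from that conv_supp[of y x] have "w \<in> (\<lambda>(u,v). u @ v) ` ({w. y w \<noteq> 0} \<times> {w. x w \<noteq> 0})" by blast
    then obtain u v where "x v \<noteq> 0" "w = u @ v" by auto
    then show ?thesis using x unfolding MI_def by (simp add: hasfac_append_left)
  qed
  then show "conv y x \<in> MI n M" unfolding MI_def using conv_closed[OF y xF] by simp
next
  fix x y assume x: "x \<in> MI n M" and y: "y \<in> FC n"
  have xF: "x \<in> FC n" using x unfolding MI_def by simp
  have "hasfac M w" if "conv x y w \<noteq> 0" for w
  proof -
    from that conv_supp[of x y] have "w \<in> (\<lambda>(u,v). u @ v) ` ({w. x w \<noteq> 0} \<times> {w. y w \<noteq> 0})" by blast
    then obtain u v where "x u \<noteq> 0" "w = u @ v" by auto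
    then show ?thesis using x unfolding MI_def by (simp add: hasfac_append_right)
  qed
  then show "conv x y \<in> MI n M" unfolding MI_def using conv_closed[OF xF y] by simp
qed

lemma mono_ideal:
  assumes M: "\<And>m. m \<in> M \<Longrightarrow> set m \<subseteq> {..<n}"
  shows "genideal (free_ring n) (delta ` M) = MI n M"
proof -
  interpret R: ring "free_ring n" by (rule ring_free_ring)
  have sub: "delta ` M \<subseteq> carrier (free_ring n)"
    using M delta_FC by (auto simp: fr_defs)
  have J: "ideal (genideal (free_ring n) (delta ` M)) (free_ring n)"
    by (rule R.genideal_ideal[OF sub])
  show ?thesis
  proof (rule subset_antisym)
    have "delta ` M \<subseteq> MI n M"
    proof
      fix x assume "x \<in> delta ` M"
      then obtain m where m: "m \<in> M" "x = delta m" by blast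
      have "hasfac M m" unfolding hasfac_def using m(1) by (intro exI[of _ "[]"] exI[of _ m]) simp
      then show "x \<in> MI n M" unfolding MI_def using m M delta_FC by (simp add: delta_def)
    qed
    then show "genideal (free_ring n) (delta ` M) \<subseteq> MI n M"
      by (intro R.genideal_minimal MI_ideal)
  next
    show "MI n M \<subseteq> genideal (free_ring n) (delta ` M)"
    proof
      fix f assume f: "f \<in> MI n M"
      have fF: "f \<in> FC n" using f unfolding MI_def by simp
      show "f \<in> genideal (free_ring n) (delta ` M)"
      proof (rule FC_decomp[where A="{w. f w \<noteq> 0}"])
        show "finite {w. f w \<noteq> 0}" using fF by (rule FC_fin)
        show "(\<lambda>w. 0) \<in> genideal (free_ring n) (delta ` M)" by (rule fr_ideal_zero[OF J])
        show "\<And>g h. g \<in> genideal (free_ring n) (delta ` M) \<Longrightarrow> h \<in> genideal (free_ring n) (delta ` M) \<Longrightarrow>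
            (\<lambda>w. g w + h w) \<in> genideal (free_ring n) (delta ` M)"
          by (rule fr_ideal_add[OF J])
      next
        fix w k assume "w \<in> {w. f w \<noteq> 0}"
        then have fw: "f w \<noteq> 0" by simp
        then have "hasfac M w" using f unfolding MI_def by blast
        then obtain p m s where pms: "m \<in> M" "w = p @ m @ s" unfolding hasfac_def by blast
        have sw: "set w \<subseteq> {..<n}" using FC_set[OF fF fw] .
        have dm: "delta m \<in> genideal (free_ring n) (delta ` M)"
          using R.genideal_self[OF sub] pms(1) by blast
        have "conv (cst k) (conv (delta p) (conv (delta m) (delta s))) \<in> genideal (free_ring n) (delta ` M)"
          using sw pms(2)
          by (intro fr_ideal_lmul[OF J] fr_ideal_rmul[OF J] dm cst_FC delta_FC) auto
        then show "smul k (delta w) \<in> genideal (free_ring n) (delta ` M)"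
          by (simp add: conv_cst conv_delta_delta pms(2))
      qed simp
    qed
  qed
qed

definition Mz :: "nat list set" where "Mz = {[0,2],[2,0],[1,2],[2,1]}"
definition m1 :: "nat \<Rightarrow> nat list" where "m1 j = 0 # replicate j 1 @ [0]"
definition MA :: "nat list set" where "MA = Mz \<union> range m1"
definition MB :: "nat list set" where "MB = {[2]}"
definition MK :: "nat \<Rightarrow> nat list set" where "MK k = Mz \<union> m1 ` {..<k}"

lemma hasfac_mono: "M \<subseteq> M' \<Longrightarrow> hasfac M w \<Longrightarrow> hasfac M' w"
  unfolding hasfac_def by blast

lemma MI_mono: "M \<subseteq> M' \<Longrightarrow> MI n M \<subseteq> MI n M'"
  unfolding MI_def using hasfac_mono by blast

lemma hasfac_Mz_MB: "hasfac Mz w \<Longrightarrow> hasfac MB w"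
proof -
  assume "hasfac Mz w"
  then obtain p m s where "m \<in> Mz" "w = p @ m @ s" unfolding hasfac_def by blast
  then have "2 \<in> set w" unfolding Mz_def by auto
  then obtain p' s' where "w = p' @ [2] @ s'" by (metis append_Cons append_Nil split_list)
  then show "hasfac MB w" unfolding hasfac_def MB_def by blast
qed

lemma hasfac_Cons: "hasfac M w \<Longrightarrow> hasfac M (c # w)"
  using hasfac_append_left[of M w "[c]"] by simp

lemma two_fac:
  "set w \<subseteq> {..<3} \<Longrightarrow> 2 \<in> set w \<Longrightarrow> a \<in> set w \<Longrightarrow> a \<noteq> 2 \<Longrightarrow> hasfac Mz w"
proof (induction w arbitrary: a)
  case Nil then show ?case by simp
next
  case (Cons c w)
  show ?case
  proof (cases w)
    case Nil
    then show ?thesis using Cons.prems by auto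
  next
    case Cons2: (Cons d v)
    have d3: "d < 3" "c < 3" using Cons.prems(1) Cons2 by auto
    show ?thesis
    proof (cases "c = 2")
      case True
      show ?thesis
      proof (cases "d = 2")
        case True
        have "a \<in> set w" using Cons.prems(3,4) \<open>c = 2\<close> by auto
        then have "hasfac Mz w" using Cons.IH[of a] Cons.prems Cons2 True by auto
        then show ?thesis by (rule hasfac_Cons)
      next
        case False
        then have "[c, d] \<in> Mz" using \<open>c = 2\<close> d3 unfolding Mz_def by auto
        then show ?thesis unfolding hasfac_def using Cons2
          by (intro exI[of _ "[]"] exI[of _ "[c,d]"] exI[of _ v]) simp
      qed
    next
      case False
      show ?thesis
      proof (cases "d = 2")
        case True
        then have "[c, d] \<in> Mz" using \<open>c \<noteq> 2\<close> d3 unfolding Mz_def by auto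
        then show ?thesis unfolding hasfac_def using Cons2
          by (intro exI[of _ "[]"] exI[of _ "[c,d]"] exI[of _ v]) simp
      next
        case False
        have "2 \<in> set w" using Cons.prems(2) \<open>c \<noteq> 2\<close> by auto
        moreover have "d \<in> set w" using Cons2 by simp
        ultimately have "hasfac Mz w" using Cons.IH[of d] Cons.prems(1) False by auto
        then show ?thesis by (rule hasfac_Cons)
      qed
    qed
  qed
qed

lemma count0_m1: "length (filter ((=) 0) (m1 j)) = 2"
  by (simp add: m1_def)

lemma m1_not_2: "2 \<notin> set (m1 j)"
  by (simp add: m1_def)

lemma m1_inj: "m1 j = m1 k \<Longrightarrow> j = k"
  by (simp add: m1_def)

lemma m1_factor: assumes "m1 k = p @ m1 j @ s" shows "p = [] \<and> s = [] \<and> j = k"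
proof -
  have "length (filter ((=) 0) (m1 k)) = length (filter ((=) 0) p) + 2 + length (filter ((=) 0) s)"
    using assms count0_m1[of j] by simp
  then have p0: "filter ((=) 0) p = []" and s0: "filter ((=) 0) s = []"
    using count0_m1[of k] by simp_all
  have "p = []"
  proof (rule ccontr)
    assume "p \<noteq> []"
    then obtain c p' where "p = c # p'" by (cases p) auto
    then have "c = 0" using assms by (simp add: m1_def)
    then show False using p0 \<open>p = c # p'\<close> by simp
  qed
  moreover have "s = []"
  proof (rule ccontr)
    assume "s \<noteq> []"
    then obtain s' c where "s = s' @ [c]" by (cases s rule: rev_cases) auto
    then have "c = 0" using assms by (simp add: m1_def)
    then show False using s0 \<open>s = s' @ [c]\<close> by simp
  qed
  ultimately show ?thesis using assms m1_inj by simp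
qed

lemma m1_not_fac: "\<not> hasfac (MK k) (m1 k)"
proof
  assume "hasfac (MK k) (m1 k)"
  then obtain p m s where pms: "m \<in> MK k" "m1 k = p @ m @ s" unfolding hasfac_def by blast
  show False
  proof (cases "m \<in> Mz")
    case True
    then have "2 \<in> set m" unfolding Mz_def by auto
    then have "2 \<in> set (m1 k)" using pms(2) by simp
    then show False using m1_not_2 by blast
  next
    case False
    then obtain j where "j < k" "m = m1 j" using pms(1) unfolding MK_def by auto
    then show False using m1_factor[of k p j s] pms(2) by simp
  qed
qed

lemma m1_set: "set (m1 j) \<subseteq> {..<3}" by (auto simp: m1_def)

lemma MA_set: "m \<in> MA \<Longrightarrow> set m \<subseteq> {..<3}"
  unfolding MA_def Mz_def using m1_set by auto
lemma MB_set: "m \<in> MB \<Longrightarrow> set m \<subseteq> {..<3}"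
  unfolding MB_def by auto
lemma Mz_set: "m \<in> Mz \<Longrightarrow> set m \<subseteq> {..<3}"
  unfolding Mz_def by auto
lemma MK_set: "m \<in> MK k \<Longrightarrow> set m \<subseteq> {..<3}"
  unfolding MK_def Mz_def using m1_set by auto

lemma MI_inter: "MI 3 MA \<inter> MI 3 MB = MI 3 Mz"
proof (rule subset_antisym)
  show "MI 3 Mz \<subseteq> MI 3 MA \<inter> MI 3 MB"
    unfolding MI_def MA_def using hasfac_Mz_MB hasfac_mono[of Mz "Mz \<union> range m1"] by blast
next
  show "MI 3 MA \<inter> MI 3 MB \<subseteq> MI 3 Mz"
  proof
    fix f assume f: "f \<in> MI 3 MA \<inter> MI 3 MB"
    have "hasfac Mz w" if fw: "f w \<noteq> 0" for w
    proof -
      have sw: "set w \<subseteq> {..<3}" using f fw unfolding MI_def using FC_set by blast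
      have hA: "hasfac MA w" and hB: "hasfac MB w" using f fw unfolding MI_def by blast+
      from hB have w2: "2 \<in> set w" unfolding hasfac_def MB_def by auto
      from hA obtain p m s where pms: "m \<in> MA" "w = p @ m @ s" unfolding hasfac_def by blast
      show ?thesis
      proof (cases "m \<in> Mz")
        case True then show ?thesis using pms unfolding hasfac_def by blast
      next
        case False
        then obtain j where "m = m1 j" using pms(1) unfolding MA_def by auto
        then have "0 \<in> set w" using pms(2) by (simp add: m1_def)
        then show ?thesis using two_fac[OF sw w2, of 0] by simp
      qed
    qed
    then show "f \<in> MI 3 Mz" using f unfolding MI_def by blast
  qed
qed

lemma MK_mono: "MK k \<subseteq> MK (Suc k)"
  unfolding MK_def by auto

lemma MK_MA: "MK k \<subseteq> MA"
  unfolding MK_def MA_def by auto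

lemma MI_union: "MI 3 MA = (\<Union>k. MI 3 (MK k))"
proof (rule subset_antisym)
  show "(\<Union>k. MI 3 (MK k)) \<subseteq> MI 3 MA" using MI_mono[OF MK_MA] by blast
next
  show "MI 3 MA \<subseteq> (\<Union>k. MI 3 (MK k))"
  proof
    fix f assume f: "f \<in> MI 3 MA"
    let ?S = "{w. f w \<noteq> 0}"
    have fin: "finite ?S" using f unfolding MI_def using FC_fin by blast
    define k where "k = Suc (Max (length ` ?S))"
    have "hasfac (MK k) w" if fw: "f w \<noteq> 0" for w
    proof -
      have "hasfac MA w" using f fw unfolding MI_def by blast
      then obtain p m s where pms: "m \<in> MA" "w = p @ m @ s" unfolding hasfac_def by blast
      have lw: "length w < k" unfolding k_def using fin fw by (simp add: le_imp_less_Suc)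
      have "m \<in> MK k"
      proof (cases "m \<in> Mz")
        case True then show ?thesis unfolding MK_def by simp
      next
        case False
        then obtain j where j: "m = m1 j" using pms(1) unfolding MA_def by auto
        then have "j < length w" using pms(2) by (simp add: m1_def)
        then show ?thesis using lw j unfolding MK_def by auto
      qed
      then show ?thesis using pms(2) unfolding hasfac_def by blast
    qed
    then have "f \<in> MI 3 (MK k)" using f unfolding MI_def by blast
    then show "f \<in> (\<Union>k. MI 3 (MK k))" by blast
  qed
qed

lemma MI_strict: "delta (m1 k) \<in> MI 3 MA" "delta (m1 k) \<notin> MI 3 (MK k)"
proof -
  have df: "delta (m1 k) \<in> FC 3" by (rule delta_FC[OF m1_set])
  have "hasfac MA (m1 k)" unfolding hasfac_def MA_def
    by (intro exI[of _ "[]"] exI[of _ "m1 k"] exI[of _ "[]"]) simp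
  then show "delta (m1 k) \<in> MI 3 MA" unfolding MI_def using df by (simp add: delta_def)
  show "delta (m1 k) \<notin> MI 3 (MK k)"
    unfolding MI_def using m1_not_fac[of k] by (simp add: delta_def)
qed

definition transp :: "('a, 'b) ring_scheme \<Rightarrow> ('a \<Rightarrow> nat) \<Rightarrow> nat ring" where
  "transp T g = \<lparr> carrier = g ` carrier T,
     mult = (\<lambda>x y. g (inv_into (carrier T) g x \<otimes>\<^bsub>T\<^esub> inv_into (carrier T) g y)),
     one = g \<one>\<^bsub>T\<^esub>, zero = g \<zero>\<^bsub>T\<^esub>,
     add = (\<lambda>x y. g (inv_into (carrier T) g x \<oplus>\<^bsub>T\<^esub> inv_into (carrier T) g y)) \<rparr>"

lemma transp_iso:
  assumes "ring T" "inj_on g (carrier T)"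
  shows "g \<in> ring_iso T (transp T g)"
proof (rule ring_iso_memI)
  interpret ring T by fact
  fix x assume "x \<in> carrier T"
  then show "g x \<in> carrier (transp T g)" by (simp add: transp_def)
next
  fix x y assume "x \<in> carrier T" "y \<in> carrier T"
  then show "g (x \<otimes>\<^bsub>T\<^esub> y) = g x \<otimes>\<^bsub>transp T g\<^esub> g y"
    using assms(2) by (simp add: transp_def inv_into_f_f)
next
  fix x y assume "x \<in> carrier T" "y \<in> carrier T"
  then show "g (x \<oplus>\<^bsub>T\<^esub> y) = g x \<oplus>\<^bsub>transp T g\<^esub> g y"
    using assms(2) by (simp add: transp_def inv_into_f_f)
next
  show "g \<one>\<^bsub>T\<^esub> = \<one>\<^bsub>transp T g\<^esub>" by (simp add: transp_def)
next
  show "bij_betw g (carrier T) (carrier (transp T g))"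
    using assms(2) by (simp add: transp_def bij_betw_def)
qed

lemma transp_ring:
  assumes "ring T" "inj_on g (carrier T)"
  shows "ring (transp T g)"
proof -
  have "ring ((transp T g) \<lparr> zero := g \<zero>\<^bsub>T\<^esub> \<rparr>)"
    by (rule ring.ring_iso_imp_img_ring[OF assms(1) transp_iso[OF assms]])
  then show ?thesis by (simp add: transp_def)
qed

lemma FC_countable: "countable (FC n)"
proof (rule countable_image_inj_on)
  let ?gr = "\<lambda>f::nat list \<Rightarrow> int. (\<lambda>w. (w, f w)) ` {w. f w \<noteq> 0}"
  show "inj_on ?gr (FC n)"
  proof (rule inj_onI)
    fix f g :: "nat list \<Rightarrow> int"
    assume eq: "?gr f = ?gr g"
    show "f = g"
    proof
      fix w
      show "f w = g w"
      proof (cases "f w = 0")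
        case True
        show ?thesis
        proof (rule ccontr)
          assume "f w \<noteq> g w"
          then have "(w, g w) \<in> ?gr g" using True by auto
          then have "(w, g w) \<in> ?gr f" using eq by simp
          then show False using True \<open>f w \<noteq> g w\<close> by auto
        qed
      next
        case False
        then have "(w, f w) \<in> ?gr f" by auto
        then have "(w, f w) \<in> ?gr g" using eq by simp
        then show ?thesis by auto
      qed
    qed
  qed
  have "?gr ` FC n \<subseteq> Collect finite"
    using FC_fin by auto
  then show "countable (?gr ` FC n)"
    by (rule countable_subset) (rule countable_Collect_finite)
qed

definition repr :: "'a set \<Rightarrow> 'a" where "repr X = (SOME x. x \<in> X)"

lemma quot_repr:
  assumes "ring R" "ideal I R" "X \<in> carrier (R Quot I)"
  shows "repr X \<in> carrier R \<and> X = I +>\<^bsub>R\<^esub> repr X"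
proof -
  interpret ring R by fact
  interpret abelian_subgroup I R
    by (rule abelian_subgroupI3[OF ideal.axioms(1)[OF assms(2)] is_abelian_group])
  obtain a where a: "a \<in> carrier R" "X = I +>\<^bsub>R\<^esub> a"
    using assms(3) unfolding FactRing_def A_RCOSETS_def' by auto
  have "a \<in> X" using a a_rcos_self by simp
  then have rX: "repr X \<in> X" unfolding repr_def by (rule someI)
  then have "I +>\<^bsub>R\<^esub> a = I +>\<^bsub>R\<^esub> repr X" using a by (intro a_repr_independence') simp_all
  moreover have "repr X \<in> carrier R" using rX a a_r_coset_subset_G[OF a_subset] by auto
  ultimately show ?thesis using a by simp
qed

lemma quot_in: "a \<in> carrier R \<Longrightarrow> I +>\<^bsub>R\<^esub> a \<in> carrier (R Quot I)"
  unfolding FactRing_def A_RCOSETS_def' by auto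

lemma quot_ker:
  assumes "ring R" "ideal I R" "a \<in> carrier R"
  shows "(I +>\<^bsub>R\<^esub> a = I) \<longleftrightarrow> a \<in> I"
proof
  assume "I +>\<^bsub>R\<^esub> a = I" then show "a \<in> I" by (rule ideal.rcos_const_imp_mem[OF assms(2,3)])
next
  interpret ring R by fact
  interpret abelian_subgroup I R
    by (rule abelian_subgroupI3[OF ideal.axioms(1)[OF assms(2)] is_abelian_group])
  assume "a \<in> I" then show "I +>\<^bsub>R\<^esub> a = I" by (rule a_rcos_const)
qed

lemma quot_zero: "\<zero>\<^bsub>R Quot I\<^esub> = I" by (simp add: FactRing_def)

lemma RDP_mult: "(a, b) \<otimes>\<^bsub>RDirProd R S\<^esub> (c, d) = (a \<otimes>\<^bsub>R\<^esub> c, b \<otimes>\<^bsub>S\<^esub> d)"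
  by (simp add: RDirProd_def DirProd_def monoid.defs)
lemma RDP_add: "(a, b) \<oplus>\<^bsub>RDirProd R S\<^esub> (c, d) = (a \<oplus>\<^bsub>R\<^esub> c, b \<oplus>\<^bsub>S\<^esub> d)"
  by (simp add: RDirProd_def DirProd_def monoid.defs)
lemma RDP_one: "\<one>\<^bsub>RDirProd R S\<^esub> = (\<one>\<^bsub>R\<^esub>, \<one>\<^bsub>S\<^esub>)"
  by (simp add: RDirProd_def DirProd_def monoid.defs)
lemma RDP_zero: "\<zero>\<^bsub>RDirProd R S\<^esub> = (\<zero>\<^bsub>R\<^esub>, \<zero>\<^bsub>S\<^esub>)"
  by (simp add: RDirProd_def DirProd_def monoid.defs)

lemma fst_hom: "fst \<in> ring_hom (RDirProd R S) R"
proof (rule ring_hom_memI)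
  fix x assume "x \<in> carrier (RDirProd R S)" then show "fst x \<in> carrier R"
    by (auto simp: RDirProd_carrier)
next
  fix x y assume "x \<in> carrier (RDirProd R S)" "y \<in> carrier (RDirProd R S)"
  then show "fst (x \<otimes>\<^bsub>RDirProd R S\<^esub> y) = fst x \<otimes>\<^bsub>R\<^esub> fst y"
    by (cases x, cases y) (simp add: RDP_mult)
next
  fix x y assume "x \<in> carrier (RDirProd R S)" "y \<in> carrier (RDirProd R S)"
  then show "fst (x \<oplus>\<^bsub>RDirProd R S\<^esub> y) = fst x \<oplus>\<^bsub>R\<^esub> fst y"
    by (cases x, cases y) (simp add: RDP_add)
next
  show "fst \<one>\<^bsub>RDirProd R S\<^esub> = \<one>\<^bsub>R\<^esub>" by (simp add: RDP_one)
qed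

lemma minus_solve:
  assumes "ring R" "x \<in> carrier R" "y \<in> carrier R" "z \<in> carrier R" "z \<oplus>\<^bsub>R\<^esub> y = x"
  shows "x \<ominus>\<^bsub>R\<^esub> y = z"
proof -
  interpret ring R by fact
  have "x \<ominus>\<^bsub>R\<^esub> y = (z \<oplus>\<^bsub>R\<^esub> y) \<oplus>\<^bsub>R\<^esub> \<ominus>\<^bsub>R\<^esub> y" using assms(5) by (simp add: a_minus_def)
  also have "\<dots> = z \<oplus>\<^bsub>R\<^esub> (y \<oplus>\<^bsub>R\<^esub> \<ominus>\<^bsub>R\<^esub> y)" using assms(2-4) by (simp add: add.m_assoc)
  also have "\<dots> = z" using assms(3,4) by (simp add: r_neg)
  finally show ?thesis .
qed

definition IA :: "(nat list \<Rightarrow> int) set" where "IA = MI 3 MA"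
definition IB :: "(nat list \<Rightarrow> int) set" where "IB = MI 3 MB"
abbreviation F3 :: "(nat list \<Rightarrow> int) ring" where "F3 \<equiv> free_ring 3"
abbreviation QA where "QA \<equiv> F3 Quot IA"
abbreviation QB where "QB \<equiv> F3 Quot IB"
definition PP where "PP = RDirProd QA QB"
definition cp where "cp = (\<lambda>a. (IA +>\<^bsub>F3\<^esub> a, IB +>\<^bsub>F3\<^esub> a))"
definition enc :: "(nat list \<Rightarrow> int) set \<times> (nat list \<Rightarrow> int) set \<Rightarrow> nat" where
  "enc p = prod_encode (to_nat_on (FC 3) (repr (fst p)), to_nat_on (FC 3) (repr (snd p)))"
definition RR :: "nat ring" where "RR = transp PP enc"
definition SS :: "nat set" where "SS = enc ` cp ` carrier F3"
definition ee :: nat where "ee = enc (\<one>\<^bsub>QA\<^esub>, \<zero>\<^bsub>QB\<^esub>)"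

lemma ring_F3: "ring F3" by (rule ring_free_ring)
lemma IA_ideal: "ideal IA F3" unfolding IA_def by (rule MI_ideal)
lemma IB_ideal: "ideal IB F3" unfolding IB_def by (rule MI_ideal)
lemma ring_QA: "ring QA" by (rule ideal.quotient_is_ring[OF IA_ideal])
lemma ring_QB: "ring QB" by (rule ideal.quotient_is_ring[OF IB_ideal])
lemma ring_PP: "ring PP" unfolding PP_def by (rule RDirProd_ring[OF ring_QA ring_QB])
lemma carrier_PP: "carrier PP = carrier QA \<times> carrier QB" unfolding PP_def by (rule RDirProd_carrier)

lemma enc_inj: "inj_on enc (carrier PP)"
proof (rule inj_onI)
  fix p p' assume p: "p \<in> carrier PP" and p': "p' \<in> carrier PP" and eq: "enc p = enc p'"
  obtain a b where ab: "p = (a, b)" "a \<in> carrier QA" "b \<in> carrier QB" using p carrier_PP by auto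
  obtain a' b' where ab': "p' = (a', b')" "a' \<in> carrier QA" "b' \<in> carrier QB" using p' carrier_PP by auto
  have ra: "repr a \<in> carrier F3 \<and> a = IA +>\<^bsub>F3\<^esub> repr a" by (rule quot_repr[OF ring_F3 IA_ideal ab(2)])
  have ra': "repr a' \<in> carrier F3 \<and> a' = IA +>\<^bsub>F3\<^esub> repr a'" by (rule quot_repr[OF ring_F3 IA_ideal ab'(2)])
  have rb: "repr b \<in> carrier F3 \<and> b = IB +>\<^bsub>F3\<^esub> repr b" by (rule quot_repr[OF ring_F3 IB_ideal ab(3)])
  have rb': "repr b' \<in> carrier F3 \<and> b' = IB +>\<^bsub>F3\<^esub> repr b'" by (rule quot_repr[OF ring_F3 IB_ideal ab'(3)])
  have inj: "inj_on (to_nat_on (FC 3)) (FC 3)" by (rule inj_on_to_nat_on[OF FC_countable])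
  from eq have "to_nat_on (FC 3) (repr a) = to_nat_on (FC 3) (repr a')"
      "to_nat_on (FC 3) (repr b) = to_nat_on (FC 3) (repr b')"
    by (simp_all add: enc_def ab ab')
  then have "repr a = repr a'" "repr b = repr b'"
    using inj ra ra' rb rb' unfolding inj_on_def fr_carrier by blast+
  then have "a = a'" "b = b'" using ra ra' rb rb' by metis+
  then show "p = p'" using ab ab' by simp
qed

lemma enc_iso: "enc \<in> ring_iso PP RR"
  unfolding RR_def by (rule transp_iso[OF ring_PP enc_inj])

lemma ring_RR: "ring RR"
  unfolding RR_def by (rule transp_ring[OF ring_PP enc_inj])

lemma enc_hom: "enc \<in> ring_hom PP RR" using enc_iso unfolding ring_iso_def by blast

lemma enc_mult: "x \<in> carrier PP \<Longrightarrow> y \<in> carrier PP \<Longrightarrow> enc (x \<otimes>\<^bsub>PP\<^esub> y) = enc x \<otimes>\<^bsub>RR\<^esub> enc y"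
  by (rule ring_hom_mult[OF enc_hom])
lemma enc_add: "x \<in> carrier PP \<Longrightarrow> y \<in> carrier PP \<Longrightarrow> enc (x \<oplus>\<^bsub>PP\<^esub> y) = enc x \<oplus>\<^bsub>RR\<^esub> enc y"
  by (rule ring_hom_add[OF enc_hom])
lemma enc_one: "enc \<one>\<^bsub>PP\<^esub> = \<one>\<^bsub>RR\<^esub>"
  by (rule ring_hom_one[OF enc_hom])
lemma enc_zero: "enc \<zero>\<^bsub>PP\<^esub> = \<zero>\<^bsub>RR\<^esub>"
  by (rule ring_hom_zero[OF enc_hom ring_PP ring_RR])
lemma carrier_RR: "carrier RR = enc ` carrier PP"
  unfolding RR_def transp_def by simp

lemma PP_mult: "(a, b) \<otimes>\<^bsub>PP\<^esub> (c, d) = (a \<otimes>\<^bsub>QA\<^esub> c, b \<otimes>\<^bsub>QB\<^esub> d)"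
  unfolding PP_def by (rule RDP_mult)
lemma PP_add: "(a, b) \<oplus>\<^bsub>PP\<^esub> (c, d) = (a \<oplus>\<^bsub>QA\<^esub> c, b \<oplus>\<^bsub>QB\<^esub> d)"
  unfolding PP_def by (rule RDP_add)
lemma PP_one: "\<one>\<^bsub>PP\<^esub> = (\<one>\<^bsub>QA\<^esub>, \<one>\<^bsub>QB\<^esub>)"
  unfolding PP_def by (rule RDP_one)
lemma PP_zero: "\<zero>\<^bsub>PP\<^esub> = (\<zero>\<^bsub>QA\<^esub>, \<zero>\<^bsub>QB\<^esub>)"
  unfolding PP_def by (rule RDP_zero)

lemma cp_hom: "cp \<in> ring_hom F3 PP"
  unfolding cp_def PP_def by (rule ring.canonical_proj_is_hom[OF ring_F3 IA_ideal IB_ideal])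

lemma cp_ker: "a_kernel F3 PP cp = IA \<inter> IB"
  unfolding cp_def PP_def by (rule ring.canonical_proj_ker[OF ring_F3 IA_ideal IB_ideal])

lemma h_hom: "enc \<circ> cp \<in> ring_hom F3 RR"
  by (rule ring_hom_trans[OF cp_hom enc_hom])

lemma SS_img: "SS = (enc \<circ> cp) ` carrier F3"
  unfolding SS_def by (simp add: image_comp)

lemma subring_SS: "subring SS RR"
proof -
  interpret H: ring_hom_ring F3 RR "enc \<circ> cp"
    by (rule ring_hom_ringI2[OF ring_F3 ring_RR h_hom])
  show ?thesis unfolding SS_img by (rule H.img_is_subring[OF H.R.carrier_is_subring])
qed

lemma ee_PP: "(\<one>\<^bsub>QA\<^esub>, \<zero>\<^bsub>QB\<^esub>) \<in> carrier PP"
  using ring.ring_simprules(6)[OF ring_QA] ring.ring_simprules(2)[OF ring_QB] carrier_PP by simp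

lemma ee_carrier: "ee \<in> carrier RR"
  unfolding ee_def carrier_RR using ee_PP by (rule imageI)

lemma ee_idem: "ee \<otimes>\<^bsub>RR\<^esub> ee = ee"
proof -
  interpret QA: ring QA by (rule ring_QA)
  interpret QB: ring QB by (rule ring_QB)
  have "ee \<otimes>\<^bsub>RR\<^esub> ee = enc ((\<one>\<^bsub>QA\<^esub>, \<zero>\<^bsub>QB\<^esub>) \<otimes>\<^bsub>PP\<^esub> (\<one>\<^bsub>QA\<^esub>, \<zero>\<^bsub>QB\<^esub>))"
    unfolding ee_def using enc_mult[OF ee_PP ee_PP] by simp
  also have "\<dots> = ee" unfolding ee_def PP_mult
    by simp
  finally show ?thesis .
qed

lemma ee_central: "x \<in> carrier RR \<Longrightarrow> ee \<otimes>\<^bsub>RR\<^esub> x = x \<otimes>\<^bsub>RR\<^esub> ee"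
proof -
  interpret QA: ring QA by (rule ring_QA)
  interpret QB: ring QB by (rule ring_QB)
  assume "x \<in> carrier RR"
  then obtain a b where ab: "x = enc (a, b)" "a \<in> carrier QA" "b \<in> carrier QB"
    unfolding carrier_RR carrier_PP by auto
  have abP: "(a, b) \<in> carrier PP" using ab carrier_PP by simp
  have "ee \<otimes>\<^bsub>RR\<^esub> x = enc ((\<one>\<^bsub>QA\<^esub>, \<zero>\<^bsub>QB\<^esub>) \<otimes>\<^bsub>PP\<^esub> (a, b))"
    unfolding ee_def ab(1) using enc_mult[OF ee_PP abP] by simp
  also have "\<dots> = enc (a, \<zero>\<^bsub>QB\<^esub>)" unfolding PP_mult
    using ab by simp
  also have "\<dots> = enc ((a, b) \<otimes>\<^bsub>PP\<^esub> (\<one>\<^bsub>QA\<^esub>, \<zero>\<^bsub>QB\<^esub>))" unfolding PP_mult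
    using ab by simp
  also have "\<dots> = x \<otimes>\<^bsub>RR\<^esub> ee"
    unfolding ee_def ab(1) using enc_mult[OF abP ee_PP] by simp
  finally show ?thesis .
qed

definition uu :: nat where "uu = enc (\<zero>\<^bsub>QA\<^esub>, \<one>\<^bsub>QB\<^esub>)"

lemma uu_PP: "(\<zero>\<^bsub>QA\<^esub>, \<one>\<^bsub>QB\<^esub>) \<in> carrier PP"
  using ring.ring_simprules(2)[OF ring_QA] ring.ring_simprules(6)[OF ring_QB] carrier_PP by simp

lemma one_minus_ee: "\<one>\<^bsub>RR\<^esub> \<ominus>\<^bsub>RR\<^esub> ee = uu"
proof (rule minus_solve[OF ring_RR])
  interpret QA: ring QA by (rule ring_QA)
  interpret QB: ring QB by (rule ring_QB)
  interpret R: ring RR by (rule ring_RR)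
  show "\<one>\<^bsub>RR\<^esub> \<in> carrier RR" by simp
  show "ee \<in> carrier RR" by (rule ee_carrier)
  show "uu \<in> carrier RR" unfolding uu_def carrier_RR using uu_PP by (rule imageI)
  have "uu \<oplus>\<^bsub>RR\<^esub> ee = enc ((\<zero>\<^bsub>QA\<^esub>, \<one>\<^bsub>QB\<^esub>) \<oplus>\<^bsub>PP\<^esub> (\<one>\<^bsub>QA\<^esub>, \<zero>\<^bsub>QB\<^esub>))"
    unfolding uu_def ee_def using enc_add[OF uu_PP ee_PP] by simp
  also have "\<dots> = enc \<one>\<^bsub>PP\<^esub>" unfolding PP_add PP_one by simp
  also have "\<dots> = \<one>\<^bsub>RR\<^esub>" by (rule enc_one)
  finally show "uu \<oplus>\<^bsub>RR\<^esub> ee = \<one>\<^bsub>RR\<^esub>" .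
qed

lemma SS_sub: "SS \<subseteq> carrier RR"
  using subringE(1)[OF subring_SS] .

lemma cp_PP: "f \<in> carrier F3 \<Longrightarrow> cp f \<in> carrier PP"
  using ring_hom_closed[OF cp_hom] .

lemma carrier_decomp:
  "carrier RR = {(s \<otimes>\<^bsub>RR\<^esub> ee) \<oplus>\<^bsub>RR\<^esub> (t \<otimes>\<^bsub>RR\<^esub> (\<one>\<^bsub>RR\<^esub> \<ominus>\<^bsub>RR\<^esub> ee)) | s t. s \<in> SS \<and> t \<in> SS}"
proof (rule subset_antisym)
  interpret QA: ring QA by (rule ring_QA)
  interpret QB: ring QB by (rule ring_QB)
  interpret R: ring RR by (rule ring_RR)
  show "{(s \<otimes>\<^bsub>RR\<^esub> ee) \<oplus>\<^bsub>RR\<^esub> (t \<otimes>\<^bsub>RR\<^esub> (\<one>\<^bsub>RR\<^esub> \<ominus>\<^bsub>RR\<^esub> ee)) | s t. s \<in> SS \<and> t \<in> SS} \<subseteq> carrier RR"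
  proof
    fix x assume "x \<in> {(s \<otimes>\<^bsub>RR\<^esub> ee) \<oplus>\<^bsub>RR\<^esub> (t \<otimes>\<^bsub>RR\<^esub> (\<one>\<^bsub>RR\<^esub> \<ominus>\<^bsub>RR\<^esub> ee)) | s t. s \<in> SS \<and> t \<in> SS}"
    then obtain s t where st: "s \<in> SS" "t \<in> SS"
      "x = (s \<otimes>\<^bsub>RR\<^esub> ee) \<oplus>\<^bsub>RR\<^esub> (t \<otimes>\<^bsub>RR\<^esub> (\<one>\<^bsub>RR\<^esub> \<ominus>\<^bsub>RR\<^esub> ee))" by blast
    have "s \<in> carrier RR" "t \<in> carrier RR" using st SS_sub by (simp_all add: subsetD)
    then show "x \<in> carrier RR" using st(3) ee_carrier by simp
  qed
next
  interpret QA: ring QA by (rule ring_QA)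
  interpret QB: ring QB by (rule ring_QB)
  show "carrier RR \<subseteq> {(s \<otimes>\<^bsub>RR\<^esub> ee) \<oplus>\<^bsub>RR\<^esub> (t \<otimes>\<^bsub>RR\<^esub> (\<one>\<^bsub>RR\<^esub> \<ominus>\<^bsub>RR\<^esub> ee)) | s t. s \<in> SS \<and> t \<in> SS}"
  proof
    fix x assume "x \<in> carrier RR"
    then obtain a b where ab: "x = enc (a, b)" "a \<in> carrier QA" "b \<in> carrier QB"
      unfolding carrier_RR carrier_PP by auto
    have ra: "repr a \<in> carrier F3 \<and> a = IA +>\<^bsub>F3\<^esub> repr a" by (rule quot_repr[OF ring_F3 IA_ideal ab(2)])
    have rb: "repr b \<in> carrier F3 \<and> b = IB +>\<^bsub>F3\<^esub> repr b" by (rule quot_repr[OF ring_F3 IB_ideal ab(3)])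
    define fa where "fa = repr a"
    define fb where "fb = repr b"
    have fa: "fa \<in> carrier F3" "a = IA +>\<^bsub>F3\<^esub> fa" using ra fa_def by simp_all
    have fb: "fb \<in> carrier F3" "b = IB +>\<^bsub>F3\<^esub> fb" using rb fb_def by simp_all
    have cpa: "cp fa = (a, IB +>\<^bsub>F3\<^esub> fa)" using fa by (simp add: cp_def)
    have cpb: "cp fb = (IA +>\<^bsub>F3\<^esub> fb, b)" using fb by (simp add: cp_def)
    have qa: "IB +>\<^bsub>F3\<^esub> fa \<in> carrier QB" by (rule quot_in[OF fa(1)])
    have qb: "IA +>\<^bsub>F3\<^esub> fb \<in> carrier QA" by (rule quot_in[OF fb(1)])
    let ?s = "enc (cp fa)" and ?t = "enc (cp fb)"
    have sS: "?s \<in> SS" "?t \<in> SS" unfolding SS_def using fa fb by blast+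
    have "(?s \<otimes>\<^bsub>RR\<^esub> ee) \<oplus>\<^bsub>RR\<^esub> (?t \<otimes>\<^bsub>RR\<^esub> (\<one>\<^bsub>RR\<^esub> \<ominus>\<^bsub>RR\<^esub> ee))
        = (enc (cp fa) \<otimes>\<^bsub>RR\<^esub> enc (\<one>\<^bsub>QA\<^esub>, \<zero>\<^bsub>QB\<^esub>)) \<oplus>\<^bsub>RR\<^esub> (enc (cp fb) \<otimes>\<^bsub>RR\<^esub> enc (\<zero>\<^bsub>QA\<^esub>, \<one>\<^bsub>QB\<^esub>))"
      unfolding one_minus_ee unfolding uu_def ee_def ..
    also have "\<dots> = enc (cp fa \<otimes>\<^bsub>PP\<^esub> (\<one>\<^bsub>QA\<^esub>, \<zero>\<^bsub>QB\<^esub>)) \<oplus>\<^bsub>RR\<^esub> enc (cp fb \<otimes>\<^bsub>PP\<^esub> (\<zero>\<^bsub>QA\<^esub>, \<one>\<^bsub>QB\<^esub>))"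
      using enc_mult[OF cp_PP[OF fa(1)] ee_PP] enc_mult[OF cp_PP[OF fb(1)] uu_PP] by simp
    also have "\<dots> = enc ((cp fa \<otimes>\<^bsub>PP\<^esub> (\<one>\<^bsub>QA\<^esub>, \<zero>\<^bsub>QB\<^esub>)) \<oplus>\<^bsub>PP\<^esub> (cp fb \<otimes>\<^bsub>PP\<^esub> (\<zero>\<^bsub>QA\<^esub>, \<one>\<^bsub>QB\<^esub>)))"
    proof -
      interpret P: ring PP by (rule ring_PP)
      show ?thesis using enc_add cp_PP fa(1) fb(1) ee_PP uu_PP by simp
    qed
    also have "(cp fa \<otimes>\<^bsub>PP\<^esub> (\<one>\<^bsub>QA\<^esub>, \<zero>\<^bsub>QB\<^esub>)) \<oplus>\<^bsub>PP\<^esub> (cp fb \<otimes>\<^bsub>PP\<^esub> (\<zero>\<^bsub>QA\<^esub>, \<one>\<^bsub>QB\<^esub>)) = (a, b)"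
      unfolding cpa cpb PP_mult PP_add using ab(2,3) qa qb by simp
    finally have "x = (?s \<otimes>\<^bsub>RR\<^esub> ee) \<oplus>\<^bsub>RR\<^esub> (?t \<otimes>\<^bsub>RR\<^esub> (\<one>\<^bsub>RR\<^esub> \<ominus>\<^bsub>RR\<^esub> ee))" using ab(1) by simp
    then show "x \<in> {(s \<otimes>\<^bsub>RR\<^esub> ee) \<oplus>\<^bsub>RR\<^esub> (t \<otimes>\<^bsub>RR\<^esub> (\<one>\<^bsub>RR\<^esub> \<ominus>\<^bsub>RR\<^esub> ee)) | s t. s \<in> SS \<and> t \<in> SS}"
      using sS by blast
  qed
qed

lemma Mz_finite: "finite Mz" unfolding Mz_def by simp

lemma IM_gen: "genideal F3 (delta ` Mz) = MI 3 Mz"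
  by (rule mono_ideal[OF Mz_set])

lemma fp_SS: "finitely_presented (RR\<lparr>carrier := SS\<rparr>)"
proof -
  let ?S = "RR\<lparr>carrier := SS\<rparr>"
  let ?h = "enc \<circ> cp"
  have ringS: "ring ?S" by (rule ring.subring_is_ring[OF ring_RR subring_SS])
  have hS: "?h \<in> ring_hom F3 ?S"
  proof (rule ring_hom_memI)
    fix x assume "x \<in> carrier F3" then show "?h x \<in> carrier ?S" unfolding SS_img by simp
  next
    fix x y assume "x \<in> carrier F3" "y \<in> carrier F3"
    then show "?h (x \<otimes>\<^bsub>F3\<^esub> y) = ?h x \<otimes>\<^bsub>?S\<^esub> ?h y"
      using ring_hom_mult[OF h_hom] by simp
  next
    fix x y assume "x \<in> carrier F3" "y \<in> carrier F3"
    then show "?h (x \<oplus>\<^bsub>F3\<^esub> y) = ?h x \<oplus>\<^bsub>?S\<^esub> ?h y"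
      using ring_hom_add[OF h_hom] by simp
  next
    show "?h \<one>\<^bsub>F3\<^esub> = \<one>\<^bsub>?S\<^esub>" using ring_hom_one[OF h_hom] by simp
  qed
  interpret H: ring_hom_ring F3 ?S ?h by (rule ring_hom_ringI2[OF ring_F3 ringS hS])
  have iso1: "F3 Quot (a_kernel F3 ?S ?h) \<simeq> ?S"
    by (rule H.FactRing_iso) (simp add: SS_img)
  have ker: "a_kernel F3 ?S ?h = genideal F3 (delta ` Mz)"
  proof -
    have "a_kernel F3 ?S ?h = {x \<in> carrier F3. enc (cp x) = enc \<zero>\<^bsub>PP\<^esub>}"
      by (simp add: a_kernel_def' enc_zero)
    also have "\<dots> = {x \<in> carrier F3. cp x = \<zero>\<^bsub>PP\<^esub>}"
    proof -
      have "enc (cp x) = enc \<zero>\<^bsub>PP\<^esub> \<longleftrightarrow> cp x = \<zero>\<^bsub>PP\<^esub>" if "x \<in> carrier F3" for x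
      proof
        assume "enc (cp x) = enc \<zero>\<^bsub>PP\<^esub>"
        then show "cp x = \<zero>\<^bsub>PP\<^esub>"
          using inj_onD[OF enc_inj, of "cp x" "\<zero>\<^bsub>PP\<^esub>"] cp_PP[OF that] ring.ring_simprules(2)[OF ring_PP]
          by simp
      qed simp
      then show ?thesis by (intro Collect_cong) (rule conj_cong[OF refl])
    qed
    also have "\<dots> = a_kernel F3 PP cp" by (simp add: a_kernel_def')
    also have "\<dots> = MI 3 Mz" by (simp add: cp_ker IA_def IB_def MI_inter)
    finally show ?thesis by (simp add: IM_gen)
  qed
  have ringQ: "ring (F3 Quot (a_kernel F3 ?S ?h))"
    by (rule ideal.quotient_is_ring[OF H.kernel_is_ideal])
  have "?S \<simeq> F3 Quot genideal F3 (delta ` Mz)"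
    using ring_iso_sym[OF ringQ iso1] ker by simp
  moreover have "finite (delta ` Mz)" using Mz_finite by simp
  moreover have "delta ` Mz \<subseteq> carrier F3" using Mz_set delta_FC by (auto simp: fr_carrier)
  ultimately show ?thesis unfolding finitely_presented_def by blast
qed

lemma phiA_hom: "(\<lambda>f. IA +>\<^bsub>F3\<^esub> f) \<in> ring_hom F3 QA"
  using ideal.rcos_ring_hom[OF IA_ideal] by simp

lemma phiA_surj: "(\<lambda>f. IA +>\<^bsub>F3\<^esub> f) ` carrier F3 = carrier QA"
  unfolding FactRing_def A_RCOSETS_def' by auto

lemma phiA_ker: "a_kernel F3 QA (\<lambda>f. IA +>\<^bsub>F3\<^esub> f) = IA"
proof -
  have "a_kernel F3 QA (\<lambda>f. IA +>\<^bsub>F3\<^esub> f) = {x \<in> carrier F3. IA +>\<^bsub>F3\<^esub> x = IA}"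
    by (simp add: a_kernel_def' quot_zero)
  also have "\<dots> = {x \<in> carrier F3. x \<in> IA}"
    using quot_ker[OF ring_F3 IA_ideal] by blast
  also have "\<dots> = IA" using ideal.Icarr[OF IA_ideal] by blast
  finally show ?thesis .
qed

lemma QA_not_fp:
  assumes "\<psi> \<in> ring_hom (free_ring n) QA" "\<psi> ` carrier (free_ring n) = carrier QA"
    "a_kernel (free_ring n) QA \<psi> = genideal (free_ring n) G" "finite G" "G \<subseteq> carrier (free_ring n)"
  shows False
proof (rule not_fp_aux[OF ring_QA phiA_hom phiA_surj _ _ _ _ assms, where K="\<lambda>k. MI 3 (MK k)"])
  show "\<And>k. ideal (MI 3 (MK k)) F3" by (rule MI_ideal)
  show "\<And>k. MI 3 (MK k) \<subseteq> MI 3 (MK (Suc k))" by (rule MI_mono[OF MK_mono])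
  show "a_kernel F3 QA (\<lambda>f. IA +>\<^bsub>F3\<^esub> f) = (\<Union>k. MI 3 (MK k))"
    unfolding phiA_ker unfolding IA_def by (rule MI_union)
  show "\<And>k. MI 3 (MK k) \<noteq> a_kernel F3 QA (\<lambda>f. IA +>\<^bsub>F3\<^esub> f)"
    unfolding phiA_ker unfolding IA_def using MI_strict by blast
qed

lemma minus_add_cancel:
  assumes "ring R" "x \<in> carrier R" "y \<in> carrier R"
  shows "(x \<ominus>\<^bsub>R\<^esub> y) \<oplus>\<^bsub>R\<^esub> y = x"
proof -
  interpret ring R by fact
  have "(x \<ominus>\<^bsub>R\<^esub> y) \<oplus>\<^bsub>R\<^esub> y = x \<oplus>\<^bsub>R\<^esub> (\<ominus>\<^bsub>R\<^esub> y \<oplus>\<^bsub>R\<^esub> y)"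
    using assms by (simp add: a_minus_def add.m_assoc)
  also have "\<dots> = x" using assms by (simp add: l_neg)
  finally show ?thesis .
qed

lemma RR_not_fp: "\<not> finitely_presented RR"
proof
  assume "finitely_presented RR"
  then obtain n G where G: "finite G" "G \<subseteq> carrier (free_ring n)"
    and iso: "RR \<simeq> free_ring n Quot genideal (free_ring n) G"
    unfolding finitely_presented_def by blast
  define Fn where "Fn = free_ring n"
  define I where "I = genideal Fn G"
  have ringFn: "ring Fn" unfolding Fn_def by (rule ring_free_ring)
  have Iideal: "ideal I Fn" unfolding I_def using G(2) Fn_def by (intro ring.genideal_ideal[OF ringFn]) simp
  have ringQ: "ring (Fn Quot I)" by (rule ideal.quotient_is_ring[OF Iideal])
  obtain \<iota> where \<iota>: "\<iota> \<in> ring_iso RR (Fn Quot I)" using iso unfolding is_ring_iso_def Fn_def I_def by blast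
  define \<iota>' where "\<iota>' = inv_into (carrier RR) \<iota>"
  have \<iota>': "\<iota>' \<in> ring_iso (Fn Quot I) RR" unfolding \<iota>'_def by (rule ring_iso_set_sym[OF ring_RR \<iota>])
  have \<iota>'hom: "\<iota>' \<in> ring_hom (Fn Quot I) RR" using \<iota>' unfolding ring_iso_def by blast
  have \<iota>'bij: "bij_betw \<iota>' (carrier (Fn Quot I)) (carrier RR)" using \<iota>' unfolding ring_iso_def by blast
  define \<rho> where "\<rho> = (\<lambda>f. I +>\<^bsub>Fn\<^esub> f)"
  have \<rho>hom: "\<rho> \<in> ring_hom Fn (Fn Quot I)" unfolding \<rho>_def using ideal.rcos_ring_hom[OF Iideal] by simp
  have \<rho>surj: "\<rho> ` carrier Fn = carrier (Fn Quot I)"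
    unfolding \<rho>_def FactRing_def A_RCOSETS_def' by auto
  define \<psi>0 where "\<psi>0 = \<iota>' \<circ> \<rho>"
  have \<psi>0hom: "\<psi>0 \<in> ring_hom Fn RR" unfolding \<psi>0_def by (rule ring_hom_trans[OF \<rho>hom \<iota>'hom])
  have \<psi>0surj: "\<psi>0 ` carrier Fn = carrier RR"
    unfolding \<psi>0_def image_comp[symmetric] \<rho>surj using \<iota>'bij by (simp add: bij_betw_def)
  have \<psi>0ker: "\<psi>0 x = \<zero>\<^bsub>RR\<^esub> \<longleftrightarrow> x \<in> I" if x: "x \<in> carrier Fn" for x
  proof -
    have z: "\<iota>' \<zero>\<^bsub>Fn Quot I\<^esub> = \<zero>\<^bsub>RR\<^esub>" by (rule ring_hom_zero[OF \<iota>'hom ringQ ring_RR])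
    have rx: "\<rho> x \<in> carrier (Fn Quot I)" using \<rho>surj x by blast
    have z0: "\<zero>\<^bsub>Fn Quot I\<^esub> \<in> carrier (Fn Quot I)" by (rule ring.ring_simprules(2)[OF ringQ])
    have "\<psi>0 x = \<zero>\<^bsub>RR\<^esub> \<longleftrightarrow> \<rho> x = \<zero>\<^bsub>Fn Quot I\<^esub>"
    proof
      assume "\<psi>0 x = \<zero>\<^bsub>RR\<^esub>"
      then have "\<iota>' (\<rho> x) = \<iota>' \<zero>\<^bsub>Fn Quot I\<^esub>" using z by (simp add: \<psi>0_def)
      then show "\<rho> x = \<zero>\<^bsub>Fn Quot I\<^esub>"
        using inj_onD[OF bij_betw_imp_inj_on[OF \<iota>'bij] _ rx z0] by simp
    next
      assume "\<rho> x = \<zero>\<^bsub>Fn Quot I\<^esub>" then show "\<psi>0 x = \<zero>\<^bsub>RR\<^esub>" using z by (simp add: \<psi>0_def)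
    qed
    also have "\<dots> \<longleftrightarrow> x \<in> I"
      unfolding \<rho>_def quot_zero using quot_ker[OF ringFn Iideal x] .
    finally show ?thesis .
  qed
  define enc' where "enc' = inv_into (carrier PP) enc"
  have enc': "enc' \<in> ring_iso RR PP" unfolding enc'_def by (rule ring_iso_set_sym[OF ring_PP enc_iso])
  have enc'hom: "enc' \<in> ring_hom RR PP" using enc' unfolding ring_iso_def by blast
  have enc'enc: "enc' (enc p) = p" if "p \<in> carrier PP" for p
    unfolding enc'_def using enc_inj that by (rule inv_into_f_f)
  have encenc': "enc (enc' y) = y" if "y \<in> carrier RR" for y
    unfolding enc'_def using that carrier_RR by (simp add: f_inv_into_f)
  define \<psi> where "\<psi> = fst \<circ> (enc' \<circ> \<psi>0)"
  have fsthom: "fst \<in> ring_hom PP QA" unfolding PP_def by (rule fst_hom)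
  have \<psi>hom: "\<psi> \<in> ring_hom Fn QA"
    unfolding \<psi>_def by (rule ring_hom_trans[OF ring_hom_trans[OF \<psi>0hom enc'hom] fsthom])
  have \<psi>surj: "\<psi> ` carrier Fn = carrier QA"
  proof (rule subset_antisym)
    show "\<psi> ` carrier Fn \<subseteq> carrier QA" using ring_hom_closed[OF \<psi>hom] by blast
    show "carrier QA \<subseteq> \<psi> ` carrier Fn"
    proof
      fix a assume a: "a \<in> carrier QA"
      have p: "(a, \<zero>\<^bsub>QB\<^esub>) \<in> carrier PP"
        using a ring.ring_simprules(2)[OF ring_QB] carrier_PP by simp
      then have "enc (a, \<zero>\<^bsub>QB\<^esub>) \<in> carrier RR" unfolding carrier_RR by (rule imageI)
      then obtain x where x: "x \<in> carrier Fn" "\<psi>0 x = enc (a, \<zero>\<^bsub>QB\<^esub>)" using \<psi>0surj by (metis imageE)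
      have "\<psi> x = a" unfolding \<psi>_def using x enc'enc[OF p] by simp
      then show "a \<in> \<psi> ` carrier Fn" using x(1) by (metis imageI)
    qed
  qed
  have uuRR: "uu \<in> carrier RR" unfolding uu_def carrier_RR using uu_PP by (rule imageI)
  obtain g0 where g0: "g0 \<in> carrier Fn" "\<psi>0 g0 = uu" using \<psi>0surj uuRR by (metis imageE)
  let ?G' = "G \<union> {g0}"
  have G'sub: "?G' \<subseteq> carrier Fn" using G(2) g0(1) Fn_def by simp
  have J: "ideal (genideal Fn ?G') Fn" by (rule ring.genideal_ideal[OF ringFn G'sub])
  have ker: "a_kernel Fn QA \<psi> = genideal Fn ?G'"
  proof (rule subset_antisym)
    show "genideal Fn ?G' \<subseteq> a_kernel Fn QA \<psi>"
    proof (rule ring.genideal_minimal[OF ringFn])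
      show "ideal (a_kernel Fn QA \<psi>) Fn"
        by (rule ring_hom_ring.kernel_is_ideal[OF ring_hom_ringI2[OF ringFn ring_QA \<psi>hom]])
      show "?G' \<subseteq> a_kernel Fn QA \<psi>"
      proof
        fix g assume g: "g \<in> ?G'"
        then have gc: "g \<in> carrier Fn" using G'sub by blast
        have "\<psi> g = \<zero>\<^bsub>QA\<^esub>"
        proof (cases "g = g0")
          case True
          then show ?thesis unfolding \<psi>_def using g0 enc'enc[OF uu_PP] by (simp add: uu_def)
        next
          case False
          then have "g \<in> G" using g by simp
          then have "g \<in> I" unfolding I_def using ring.genideal_self[OF ringFn] G(2) Fn_def by blast
          then have "\<psi>0 g = \<zero>\<^bsub>RR\<^esub>" using \<psi>0ker gc by simp
          then show ?thesis unfolding \<psi>_def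
            using enc'enc[OF ring.ring_simprules(2)[OF ring_PP]] enc_zero by (simp add: PP_zero)
        qed
        then show "g \<in> a_kernel Fn QA \<psi>" using gc by (simp add: a_kernel_def')
      qed
    qed
  next
    show "a_kernel Fn QA \<psi> \<subseteq> genideal Fn ?G'"
    proof
      fix x assume "x \<in> a_kernel Fn QA \<psi>"
      then have x: "x \<in> carrier Fn" "\<psi> x = \<zero>\<^bsub>QA\<^esub>" by (simp_all add: a_kernel_def')
      have px: "\<psi>0 x \<in> carrier RR" using ring_hom_closed[OF \<psi>0hom x(1)] .
      have pP: "enc' (\<psi>0 x) \<in> carrier PP" using ring_hom_closed[OF enc'hom px] .
      then obtain a b where ab: "enc' (\<psi>0 x) = (a, b)" "a \<in> carrier QA" "b \<in> carrier QB"
        using carrier_PP by (cases "enc' (\<psi>0 x)") auto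
      have a0: "a = \<zero>\<^bsub>QA\<^esub>" using x(2) ab(1) unfolding \<psi>_def by simp
      have b0P: "(\<zero>\<^bsub>QA\<^esub>, b) \<in> carrier PP" using ab a0 carrier_PP by simp
      have ex: "\<psi>0 x = enc (\<zero>\<^bsub>QA\<^esub>, b)" using encenc'[OF px] ab(1) a0 by simp
      have "enc (\<zero>\<^bsub>QA\<^esub>, b) \<in> carrier RR" unfolding carrier_RR using b0P by (rule imageI)
      then obtain w where w: "w \<in> carrier Fn" "\<psi>0 w = enc (\<zero>\<^bsub>QA\<^esub>, b)" using \<psi>0surj by (metis imageE)
      have prod: "(\<zero>\<^bsub>QA\<^esub>, b) \<otimes>\<^bsub>PP\<^esub> (\<zero>\<^bsub>QA\<^esub>, \<one>\<^bsub>QB\<^esub>) = (\<zero>\<^bsub>QA\<^esub>, b)"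
        unfolding PP_mult using ab(3) ring.ring_simprules(2)[OF ring_QA]
        by (simp add: ring.ring_simprules(24)[OF ring_QA] monoid.r_one[OF ring.is_monoid[OF ring_QB]])
      have wg: "w \<otimes>\<^bsub>Fn\<^esub> g0 \<in> carrier Fn" using w(1) g0(1) by (rule ring.ring_simprules(5)[OF ringFn])
      have "\<psi>0 (w \<otimes>\<^bsub>Fn\<^esub> g0) = \<psi>0 w \<otimes>\<^bsub>RR\<^esub> \<psi>0 g0" by (rule ring_hom_mult[OF \<psi>0hom w(1) g0(1)])
      also have "\<dots> = enc ((\<zero>\<^bsub>QA\<^esub>, b) \<otimes>\<^bsub>PP\<^esub> (\<zero>\<^bsub>QA\<^esub>, \<one>\<^bsub>QB\<^esub>))"
        unfolding w(2) g0(2) uu_def using enc_mult[OF b0P uu_PP] by simp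
      also have "\<dots> = \<psi>0 x" unfolding prod ex ..
      finally have eqw: "\<psi>0 (w \<otimes>\<^bsub>Fn\<^esub> g0) = \<psi>0 x" .
      have d: "x \<ominus>\<^bsub>Fn\<^esub> (w \<otimes>\<^bsub>Fn\<^esub> g0) \<in> carrier Fn" by (rule ring.ring_simprules(4)[OF ringFn x(1) wg])
      have "\<psi>0 (x \<ominus>\<^bsub>Fn\<^esub> (w \<otimes>\<^bsub>Fn\<^esub> g0)) = \<psi>0 x \<ominus>\<^bsub>RR\<^esub> \<psi>0 (w \<otimes>\<^bsub>Fn\<^esub> g0)"
        by (rule hom_minus[OF ringFn ring_RR \<psi>0hom x(1) wg])
      also have "\<dots> = \<zero>\<^bsub>RR\<^esub>" unfolding eqw using px by (simp add: a_minus_def abelian_group.r_neg[OF ring.is_abelian_group[OF ring_RR]])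
      finally have "x \<ominus>\<^bsub>Fn\<^esub> (w \<otimes>\<^bsub>Fn\<^esub> g0) \<in> I" using \<psi>0ker[OF d] by simp
      moreover have "I \<subseteq> genideal Fn ?G'" unfolding I_def
        by (rule ring.subset_Idl_subset[OF ringFn G'sub]) (rule Un_upper1)
      ultimately have d1: "x \<ominus>\<^bsub>Fn\<^esub> (w \<otimes>\<^bsub>Fn\<^esub> g0) \<in> genideal Fn ?G'" by blast
      have "g0 \<in> genideal Fn ?G'" using ring.genideal_self[OF ringFn G'sub] by blast
      then have d2: "w \<otimes>\<^bsub>Fn\<^esub> g0 \<in> genideal Fn ?G'" by (rule ideal.I_l_closed[OF J _ w(1)])
      have "(x \<ominus>\<^bsub>Fn\<^esub> (w \<otimes>\<^bsub>Fn\<^esub> g0)) \<oplus>\<^bsub>Fn\<^esub> (w \<otimes>\<^bsub>Fn\<^esub> g0) \<in> genideal Fn ?G'"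
        by (rule additive_subgroup.a_closed[OF ideal.axioms(1)[OF J] d1 d2])
      then show "x \<in> genideal Fn ?G'" using minus_add_cancel[OF ringFn x(1) wg] by simp
    qed
  qed
  show False
    by (rule QA_not_fp[of \<psi> n ?G']) (use \<psi>hom \<psi>surj ker G G'sub Fn_def in simp_all)
qed

theorem lemma4p1:
  shows "\<exists>(R :: nat ring) S e.
           ring R \<and> subring S R \<and>
           e \<in> carrier R \<and> e \<otimes>\<^bsub>R\<^esub> e = e \<and>
           (\<forall>x \<in> carrier R. e \<otimes>\<^bsub>R\<^esub> x = x \<otimes>\<^bsub>R\<^esub> e) \<and>
           carrier R = {(s \<otimes>\<^bsub>R\<^esub> e) \<oplus>\<^bsub>R\<^esub> (t \<otimes>\<^bsub>R\<^esub> (\<one>\<^bsub>R\<^esub> \<ominus>\<^bsub>R\<^esub> e)) | s t. s \<in> S \<and> t \<in> S} \<and>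
           finitely_presented (R\<lparr>carrier := S\<rparr>) \<and>
           \<not> finitely_presented R"
proof (intro exI conjI)
  show "ring RR" by (rule ring_RR)
  show "subring SS RR" by (rule subring_SS)
  show "ee \<in> carrier RR" by (rule ee_carrier)
  show "ee \<otimes>\<^bsub>RR\<^esub> ee = ee" by (rule ee_idem)
  show "\<forall>x \<in> carrier RR. ee \<otimes>\<^bsub>RR\<^esub> x = x \<otimes>\<^bsub>RR\<^esub> ee" using ee_central by blast
  show "carrier RR = {(s \<otimes>\<^bsub>RR\<^esub> ee) \<oplus>\<^bsub>RR\<^esub> (t \<otimes>\<^bsub>RR\<^esub> (\<one>\<^bsub>RR\<^esub> \<ominus>\<^bsub>RR\<^esub> ee)) | s t. s \<in> SS \<and> t \<in> SS}"
    by (rule carrier_decomp)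
  show "finitely_presented (RR\<lparr>carrier := SS\<rparr>)" by (rule fp_SS)
  show "\<not> finitely_presented RR" by (rule RR_not_fp)
qed

end
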